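(* (a) Let $\{X_n\}$, $\{Y_n\}$ be sequences of mm-spaces $\square$-converging to $X$ and $Y$, and let $p_n\in[1,+\infty]$ converge to $p\in[1,+\infty]$. Then $X_n\times_{p_n}Y_n$ $\square$-converges to $X\times_pY$. (b) Let $\{X_n\}$ be a sequence of mm-spaces $\square$-converging to $X$, and let $F_n,F\colon[0,+\infty)\to[0,+\infty)$ be continuous metric preserving functions with $F_n\to F$ pointwise. Then $(X_n,F_n\circ d_{X_n},m_{X_n})$ $\square$-converges to $(X,F\circ d_X,m_X)$.
   Context: An mm-space is a triple $(X,d_X,m_X)$ with $(X,d_X)$ complete separable metric space and $m_X$ a Borel probability measure, up to mm-isomorphism. $X\times_pY:=(X\times Y,d_{F_p},m_X\otimes m_Y)$ with $F_p(s,t)=(s^p+t^p)^{1/p}$ ($p<\infty$), $F_\infty=\max$, $d_{F_p}((x,y),(x',y'))=F_p(d_X(x,x'),d_Y(y,y'))$. A function $F\colon[0,+\infty)\to[0,+\infty)$ is metric preserving if $F\circ d$ is a metric for every metric $d$. Box distance: with $I=[0,1)$, Lebesgue measure $\mathcal L^1$, parameters Borel $\varphi\colon I\to X$ with $\varphi_*\mathcal L^1=m_X$: $\square(X,Y)$ is the infimum of $\varepsilon\ge0$ such that there are parameters $\varphi,\psi$ and Borel $I_0\subset I$ with $\mathcal L^1(I_0)\ge1-\varepsilon$ and $|d_X(\varphi(s),\varphi(t))-d_Y(\psi(s),\psi(t))|\le\varepsilon$ for $s,t\in I_0$. *)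

theory Defs
  imports "HOL-Probability.Probability"
begin

text \<open>An mm-space is represented by a distance function d and a measure m whose
  space is the underlying set X: (X,d) is a complete separable metric space and
  m is a Borel probability measure on it.\<close>

definition mm_space :: "('a \<Rightarrow> 'a \<Rightarrow> real) \<Rightarrow> 'a measure \<Rightarrow> bool" where
  "mm_space d m \<longleftrightarrow>
     Metric_space (space m) d \<and>
     Metric_space.mcomplete (space m) d \<and>
     separable_space (Metric_space.mtopology (space m) d) \<and>
     sets m = sigma_sets (space m) {U. openin (Metric_space.mtopology (space m) d) U} \<and>
     prob_space m"

definition unitI :: "real measure" where
  "unitI = restrict_space lborel {0..<1}"

definition parameter :: "'a measure \<Rightarrow> (real \<Rightarrow> 'a) \<Rightarrow> bool" where
  "parameter m \<phi> \<longleftrightarrow> \<phi> \<in> measurable unitI m \<and> distr unitI m \<phi> = m"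

definition box ::
  "('a \<Rightarrow> 'a \<Rightarrow> real) \<Rightarrow> 'a measure \<Rightarrow> ('b \<Rightarrow> 'b \<Rightarrow> real) \<Rightarrow> 'b measure \<Rightarrow> real" where
  "box dX mX dY mY = Inf {\<epsilon>. 0 \<le> \<epsilon> \<and>
     (\<exists>\<phi> \<psi> I0. parameter mX \<phi> \<and> parameter mY \<psi> \<and> I0 \<in> sets unitI \<and>
        measure unitI I0 \<ge> 1 - \<epsilon> \<and>
        (\<forall>s\<in>I0. \<forall>t\<in>I0. \<bar>dX (\<phi> s) (\<phi> t) - dY (\<psi> s) (\<psi> t)\<bar> \<le> \<epsilon>))}"

definition Fp :: "ennreal \<Rightarrow> real \<Rightarrow> real \<Rightarrow> real" where
  "Fp p s t = (if p = \<infinity> then max s t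
               else (s powr enn2real p + t powr enn2real p) powr (1 / enn2real p))"

definition prod_dist :: "ennreal \<Rightarrow> ('a \<Rightarrow> 'a \<Rightarrow> real) \<Rightarrow> ('b \<Rightarrow> 'b \<Rightarrow> real)
    \<Rightarrow> ('a \<times> 'b) \<Rightarrow> ('a \<times> 'b) \<Rightarrow> real" where
  "prod_dist p dX dY z w = Fp p (dX (fst z) (fst w)) (dY (snd z) (snd w))"

text \<open>Since the metric
  axioms involve at most three points, it suffices (and is equivalent) to quantify
  over metrics on arbitrary subsets of a fixed infinite type; we use nat.\<close>
definition metric_preserving :: "(real \<Rightarrow> real) \<Rightarrow> bool" where
  "metric_preserving F \<longleftrightarrow>
     (\<forall>(S :: nat set) d. Metric_space S d \<longrightarrow> Metric_space S (\<lambda>x y. F (d x y)))"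

definition box_converges ::
  "(nat \<Rightarrow> ('a \<Rightarrow> 'a \<Rightarrow> real)) \<Rightarrow> (nat \<Rightarrow> 'a measure) \<Rightarrow> ('b \<Rightarrow> 'b \<Rightarrow> real) \<Rightarrow> 'b measure \<Rightarrow> bool" where
  "box_converges dn mn d m \<longleftrightarrow> (\<lambda>n. box (dn n) (mn n) d m) \<longlonglongrightarrow> 0"

end

theory Submission
  imports Defs
begin

definition Tm :: "real \<Rightarrow> real" where "Tm x = 2*x - of_int \<lfloor>2*x\<rfloor>"
definition d0 :: "real \<Rightarrow> real" where "d0 x = of_int \<lfloor>2*x\<rfloor>"
definition dig :: "nat \<Rightarrow> real \<Rightarrow> real" where "dig k x = d0 ((Tm^^k) x)"
definition ff :: "real \<Rightarrow> real" where "ff x = (\<Sum>k. dig (2*k) x / 2^(Suc k))"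
definition gg :: "real \<Rightarrow> real" where "gg x = (\<Sum>k. dig (2*k+1) x / 2^(Suc k))"

lemma Tm_I: "Tm x \<in> {0..<1}"
  unfolding Tm_def by (auto simp: floor_le_iff) linarith+

lemma Tm_funpow_I: "x \<in> {0..<1} \<Longrightarrow> (Tm^^k) x \<in> {0..<1}"
  by (cases k) (auto simp: Tm_I simp del: atLeastLessThan_iff)

lemma d0_01: "x \<in> {0..<1} \<Longrightarrow> d0 x = 0 \<or> d0 x = 1"
proof -
  assume x: "x \<in> {0..<1}"
  then have "0 \<le> \<lfloor>2*x\<rfloor>" "\<lfloor>2*x\<rfloor> \<le> 1" by (auto simp: floor_le_iff)
  then have "\<lfloor>2*x\<rfloor> = 0 \<or> \<lfloor>2*x\<rfloor> = 1" by linarith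
  then show ?thesis unfolding d0_def by auto
qed

lemma dig_01: "x \<in> {0..<1} \<Longrightarrow> dig k x = 0 \<or> dig k x = 1"
  unfolding dig_def using d0_01 Tm_funpow_I by blast

lemma dig_Suc: "dig (Suc k) x = dig k (Tm x)"
  unfolding dig_def by (simp only: funpow_Suc_right comp_def)

lemma Tm_meas[measurable]: "Tm \<in> borel_measurable borel"
  unfolding Tm_def by measurable

lemma d0_meas[measurable]: "d0 \<in> borel_measurable borel"
  unfolding d0_def by measurable

lemma funpow_Tm_meas[measurable]: "(Tm^^k) \<in> borel_measurable borel"
  by (induction k) auto

lemma dig_meas[measurable]: "dig k \<in> borel_measurable borel"
  unfolding dig_def[abs_def] by measurable

lemma summ_dig: assumes "x \<in> {0..<1}" shows "summable (\<lambda>k. dig (h k) x / 2^(Suc k))"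
proof (rule summable_comparison_test')
  show "summable (\<lambda>k. (1/2::real)^(Suc k))" by (simp add: summable_geometric_iff)
  show "norm (dig (h k) x / 2^(Suc k)) \<le> (1/2)^(Suc k)" for k
    using dig_01[OF assms, of "h k"] by (auto simp: power_one_over)
qed

lemma sum_half: "(\<Sum>k. (1/2::real)^(Suc k)) = 1"
proof -
  have "(\<lambda>k. (1/2::real)^(Suc k)) = (\<lambda>k. (1/2)^k / 2)" by auto
  then show ?thesis using suminf_divide[OF summable_geometric[of "1/2::real"], of 2] suminf_geometric[of "1/2::real"] by simp
qed

lemma dig_nonneg: "x \<in> {0..<1} \<Longrightarrow> 0 \<le> dig k x"
  using dig_01[of x k] by auto
lemma dig_le1: "x \<in> {0..<1} \<Longrightarrow> dig k x \<le> 1"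
  using dig_01[of x k] by auto

lemma suminf_dig_bounds: assumes "x \<in> {0..<1}"
  shows "0 \<le> (\<Sum>k. dig (h k) x / 2^(Suc k)) \<and> (\<Sum>k. dig (h k) x / 2^(Suc k)) \<le> 1"
proof
  show "0 \<le> (\<Sum>k. dig (h k) x / 2^(Suc k))"
    by (rule suminf_nonneg[OF summ_dig[OF assms]]) (simp add: dig_nonneg[OF assms])
  have "(\<Sum>k. dig (h k) x / 2^(Suc k)) \<le> (\<Sum>k. (1/2::real)^(Suc k))"
  proof (rule suminf_le[OF _ summ_dig[OF assms]])
    show "summable (\<lambda>k. (1/2::real)^(Suc k))" by (simp add: summable_geometric_iff)
    show "dig (h n) x / 2^(Suc n) \<le> (1/2)^(Suc n)" for n
      using dig_le1[OF assms, of "h n"] by (simp add: power_one_over divide_right_mono)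
  qed
  then show "(\<Sum>k. dig (h k) x / 2^(Suc k)) \<le> 1" using sum_half by simp
qed

lemma ff_bounds: "x \<in> {0..<1} \<Longrightarrow> 0 \<le> ff x \<and> ff x \<le> 1"
  unfolding ff_def using suminf_dig_bounds[of x "\<lambda>k. 2*k"] by simp

lemma gg_bounds: "x \<in> {0..<1} \<Longrightarrow> 0 \<le> gg x \<and> gg x \<le> 1"
  unfolding gg_def using suminf_dig_bounds[of x "\<lambda>k. 2*k+1"] by simp

lemma gg_rec: "gg x = ff (Tm x)"
  unfolding gg_def ff_def by (simp add: dig_Suc[symmetric])

lemma ff_rec: assumes x: "x \<in> {0..<1}" shows "ff x = (d0 x + gg (Tm x)) / 2"
proof -
  have s: "summable (\<lambda>k. dig (2*k) x / 2^(Suc k))" using summ_dig[OF x] .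
  have s2: "summable (\<lambda>k. dig (2*k+1) (Tm x) / 2^(Suc k))" using summ_dig[OF Tm_I] .
  have "(\<Sum>k. dig (2*Suc k) x / 2^(Suc (Suc k))) = ff x - dig (2*0) x / 2^(Suc 0)"
    unfolding ff_def by (rule suminf_split_head[OF s])
  moreover have "(\<Sum>k. dig (2*Suc k) x / 2^(Suc (Suc k))) = (\<Sum>k. dig (2*k+1) (Tm x) / 2^(Suc k)) / 2"
  proof -
    have "(\<lambda>k. dig (2*Suc k) x / 2^(Suc (Suc k))) = (\<lambda>k. dig (2*k+1) (Tm x) / 2^(Suc k) / 2)"
      by (rule ext) (simp add: dig_Suc[symmetric])
    then show ?thesis using suminf_divide[OF s2, of 2] by simp
  qed
  moreover have "dig 0 x = d0 x" by (simp add: dig_def)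
  ultimately show ?thesis unfolding gg_def by simp
qed

lemma ff_meas[measurable]: "ff \<in> borel_measurable borel"
  unfolding ff_def[abs_def] by measurable
lemma gg_meas[measurable]: "gg \<in> borel_measurable borel"
  unfolding gg_def[abs_def] by measurable

abbreviation "UI \<equiv> {0..<1::real}"

lemma UI_fin: "A \<in> sets borel \<Longrightarrow> A \<subseteq> UI \<Longrightarrow> emeasure lborel A \<noteq> \<infinity>"
proof -
  assume "A \<in> sets borel" "A \<subseteq> UI"
  then have "emeasure lborel A \<le> emeasure lborel UI" by (intro emeasure_mono) auto
  then show ?thesis by (auto simp: top_unique)
qed

lemma UI_fmeas: "A \<in> sets borel \<Longrightarrow> A \<subseteq> UI \<Longrightarrow> A \<in> fmeasurable lborel"
  using UI_fin by (auto simp: fmeasurable_def less_top)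

lemma affine_preimage:
  assumes A: "A \<in> sets borel" and c: "c \<noteq> 0"
  shows "emeasure lborel A = ennreal \<bar>c\<bar> * emeasure lborel ((\<lambda>x. t + c * x) -` A)"
proof -
  have "emeasure lborel A = emeasure (density (distr lborel borel (\<lambda>x. t + c * x)) (\<lambda>_. ennreal \<bar>c\<bar>)) A"
    using lborel_real_affine[OF c, of t] by simp
  also have "\<dots> = ennreal \<bar>c\<bar> * emeasure (distr lborel borel (\<lambda>x. t + c * x)) A"
    using A by (simp add: emeasure_density_const)
  also have "\<dots> = ennreal \<bar>c\<bar> * emeasure lborel ((\<lambda>x. t + c * x) -` A)"
    using A by (simp add: emeasure_distr)
  finally show ?thesis .
qed

lemma L1_set:
  assumes "A \<subseteq> UI" and b: "b = 0 \<or> b = (1::real)"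
  shows "{x\<in>UI. d0 x = b \<and> Tm x \<in> A} = (\<lambda>x. - b + 2 * x) -` A"
proof (intro set_eqI iffI)
  fix x assume "x \<in> {x\<in>UI. d0 x = b \<and> Tm x \<in> A}"
  then show "x \<in> (\<lambda>x. - b + 2 * x) -` A" by (auto simp: Tm_def d0_def)
next
  fix x assume "x \<in> (\<lambda>x. - b + 2 * x) -` A"
  then have xa: "- b + 2*x \<in> A" by simp
  then have r: "0 \<le> - b + 2*x" "- b + 2*x < 1" using assms(1) by auto
  have fl: "\<lfloor>2*x\<rfloor> = b"
  proof -
    from b show ?thesis
    proof
      assume "b = 0" then show ?thesis using r by (simp add: floor_eq_iff)
    next
      assume "b = 1" then show ?thesis using r by (simp add: floor_eq_iff)
    qed
  qed
  have "x \<in> UI" using r b by auto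
  moreover have "d0 x = b" using fl by (simp add: d0_def)
  moreover have "Tm x = - b + 2*x" using fl by (simp add: Tm_def)
  ultimately show "x \<in> {x\<in>UI. d0 x = b \<and> Tm x \<in> A}" using xa by auto
qed

lemma vimage_borel: "f \<in> borel_measurable borel \<Longrightarrow> A \<in> sets borel \<Longrightarrow> f -` A \<in> sets borel"
  using measurable_sets[of f borel borel A] by simp

lemma L1_sets: assumes A: "A \<in> sets borel" shows "{x\<in>UI. d0 x = b \<and> Tm x \<in> A} \<in> sets borel"
proof -
  have "{x\<in>UI. d0 x = b \<and> Tm x \<in> A} = UI \<inter> d0 -` {b} \<inter> Tm -` A" by auto
  moreover have "d0 -` {b} \<in> sets borel" by (rule vimage_borel) auto
  moreover have "Tm -` A \<in> sets borel" by (rule vimage_borel[OF _ A]) auto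
  ultimately show ?thesis by auto
qed

lemma L1:
  assumes A: "A \<in> sets borel" "A \<subseteq> UI" and b: "b = 0 \<or> b = (1::real)"
  shows "measure lborel {x\<in>UI. d0 x = b \<and> Tm x \<in> A} = measure lborel A / 2"
proof -
  have "emeasure lborel A = ennreal 2 * emeasure lborel {x\<in>UI. d0 x = b \<and> Tm x \<in> A}"
    using affine_preimage[OF A(1), of 2 "-b"] L1_set[OF A(2) b] by simp
  then have "measure lborel A = 2 * measure lborel {x\<in>UI. d0 x = b \<and> Tm x \<in> A}"
    unfolding measure_def by (simp add: enn2real_mult)
  then show ?thesis by simp
qed

lemma T_pres:
  assumes A: "A \<in> sets borel" "A \<subseteq> UI"
  shows "measure lborel {x\<in>UI. Tm x \<in> A} = measure lborel A"
proof -
  have eq: "{x\<in>UI. Tm x \<in> A} = {x\<in>UI. d0 x = 0 \<and> Tm x \<in> A} \<union> {x\<in>UI. d0 x = 1 \<and> Tm x \<in> A}"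
    using d0_01 by auto
  have "measure lborel {x\<in>UI. Tm x \<in> A} = measure lborel {x\<in>UI. d0 x = 0 \<and> Tm x \<in> A} + measure lborel {x\<in>UI. d0 x = 1 \<and> Tm x \<in> A}"
  proof -
    have s0: "{x\<in>UI. d0 x = 0 \<and> Tm x \<in> A} \<in> sets lborel" "{x\<in>UI. d0 x = 1 \<and> Tm x \<in> A} \<in> sets lborel"
      using L1_sets[OF A(1)] by simp_all
    have f0: "emeasure lborel {x\<in>UI. d0 x = 0 \<and> Tm x \<in> A} \<noteq> \<infinity>" "emeasure lborel {x\<in>UI. d0 x = 1 \<and> Tm x \<in> A} \<noteq> \<infinity>"
      by (rule UI_fin, use s0 in simp, blast)+
    show ?thesis unfolding eq by (rule measure_Union[OF f0 s0]) auto
  qed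
  then show ?thesis using L1[OF A, of 0] L1[OF A, of 1] by simp
qed

lemma ff_one_iff: assumes x: "x \<in> UI" shows "ff x = 1 \<longleftrightarrow> d0 x = 1 \<and> ff (Tm (Tm x)) = 1"
proof -
  have e: "ff x = (d0 x + ff (Tm (Tm x))) / 2" using ff_rec[OF x] gg_rec[of "Tm x"] by simp
  have b: "0 \<le> ff (Tm (Tm x))" "ff (Tm (Tm x)) \<le> 1" using ff_bounds[OF Tm_I[of "Tm x"]] by auto
  have "d0 x = 0 \<or> d0 x = 1" using d0_01[OF x] .
  then show ?thesis using e b by auto
qed

lemma ff_null: "measure lborel {x\<in>UI. ff x = 1} = 0"
proof -
  let ?N = "{x\<in>UI. ff x = 1}"
  let ?N' = "{y\<in>UI. Tm y \<in> ?N}"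
  have N: "?N \<in> sets borel" "?N \<subseteq> UI" by measurable auto
  have N': "?N' \<in> sets borel" "?N' \<subseteq> UI" by measurable auto
  have "?N = {x\<in>UI. d0 x = 1 \<and> Tm x \<in> ?N'}"
  proof (intro set_eqI iffI)
    fix x assume "x \<in> ?N" then show "x \<in> {x\<in>UI. d0 x = 1 \<and> Tm x \<in> ?N'}"
      using ff_one_iff[of x] Tm_I[of x] Tm_I[of "Tm x"] by simp
  next
    fix x assume "x \<in> {x\<in>UI. d0 x = 1 \<and> Tm x \<in> ?N'}" then show "x \<in> ?N"
      using ff_one_iff[of x] by simp
  qed
  note eqN = this
  have L: "measure lborel {x\<in>UI. d0 x = 1 \<and> Tm x \<in> ?N'} = measure lborel ?N' / 2" by (rule L1[OF N']) simp
  have T: "measure lborel ?N' = measure lborel ?N" by (rule T_pres[OF N])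
  from eqN L T have "measure lborel ?N = measure lborel ?N / 2" by metis
  then show ?thesis by linarith
qed

lemma gg_null: "measure lborel {x\<in>UI. gg x = 1} = 0"
proof -
  have e: "{x\<in>UI. gg x = 1} = {x\<in>UI. Tm x \<in> {x\<in>UI. ff x = 1}}" using gg_rec Tm_I by auto
  have "{x\<in>UI. ff x = 1} \<in> sets borel" by measurable
  then have "measure lborel {x\<in>UI. Tm x \<in> {x\<in>UI. ff x = 1}} = measure lborel {x\<in>UI. ff x = 1}"
    by (intro T_pres) auto
  then show ?thesis using e ff_null by metis
qed

lemma null_UI: "A \<in> sets borel \<Longrightarrow> A \<subseteq> UI \<Longrightarrow> measure lborel A = 0 \<Longrightarrow> A \<in> null_sets lborel"
  using UI_fin by (simp add: null_sets_def emeasure_eq_ennreal_measure)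

lemma lvl_sets: "(f::real\<Rightarrow>real) \<in> borel_measurable borel \<Longrightarrow> {x\<in>UI. f x = c} \<in> sets borel"
proof -
  assume f: "f \<in> borel_measurable borel"
  have "{x\<in>UI. f x = c} = UI \<inter> f -` {c}" by auto
  moreover have "f -` {c} \<in> sets borel" by (rule vimage_borel[OF f]) (intro borel_closed, simp)
  ultimately show ?thesis by auto
qed

lemma ff_nullset: "{x\<in>UI. ff x = 1} \<in> null_sets lborel"
  by (rule null_UI[OF lvl_sets[OF ff_meas] _ ff_null]) auto
lemma gg_nullset: "{x\<in>UI. gg x = 1} \<in> null_sets lborel"
  by (rule null_UI[OF lvl_sets[OF gg_meas] _ gg_null]) auto

lemma measure_eq_upto_null:
  assumes "A \<in> sets borel" "B \<in> sets borel" "Z \<in> null_sets lborel" "A - B \<subseteq> Z" "B - A \<subseteq> Z"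
  shows "measure lborel A = measure lborel B"
proof -
  have "A \<union> Z = B \<union> Z" using assms(4,5) by auto
  then have "measure lborel (A \<union> Z) = measure lborel (B \<union> Z)" by simp
  moreover have "A \<in> sets lborel" "B \<in> sets lborel" using assms by auto
  ultimately show ?thesis using measure_Un_null_set[of A lborel Z] measure_Un_null_set[of B lborel Z] assms(3) by simp
qed

definition Dy :: "nat \<Rightarrow> nat \<Rightarrow> real set" where
  "Dy m i = {real i / 2^m ..< (real i + 1) / 2^m}"

definition Qs :: "real set \<Rightarrow> real set \<Rightarrow> real set" where
  "Qs A B = {x\<in>UI. ff x \<in> A \<and> gg x \<in> B}"

lemma Dy_sets[measurable]: "Dy m i \<in> sets borel"
  unfolding Dy_def by simp

lemma Qs_sets: assumes "A \<in> sets borel" "B \<in> sets borel" shows "Qs A B \<in> sets borel"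
proof -
  have "Qs A B = UI \<inter> ff -` A \<inter> gg -` B" unfolding Qs_def by auto
  moreover have "ff -` A \<in> sets borel" "gg -` B \<in> sets borel"
    using vimage_borel[OF ff_meas assms(1)] vimage_borel[OF gg_meas assms(2)] .
  ultimately show ?thesis by auto
qed

lemma Qs_sub: "Qs A B \<subseteq> UI" unfolding Qs_def by auto

lemma Dy_floor: "v \<in> Dy m i \<longleftrightarrow> \<lfloor>2^m * v\<rfloor> = int i"
proof -
  have p: "(0::real) < 2^m" by simp
  have "v \<in> Dy m i \<longleftrightarrow> real i \<le> 2^m * v \<and> 2^m * v < real i + 1"
    unfolding Dy_def using p by (auto simp: divide_le_eq less_divide_eq mult.commute)
  also have "\<dots> \<longleftrightarrow> \<lfloor>2^m * v\<rfloor> = int i" by (simp add: floor_eq_iff)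
  finally show ?thesis .
qed

lemma Dy_step:
  assumes d: "d = 0 \<or> d = (1::real)" and v: "0 \<le> v" "v < 1"
  shows "(d + v) / 2 \<in> Dy (Suc m) i \<longleftrightarrow> d = real (i div 2^m) \<and> v \<in> Dy m (i mod 2^m)"
proof -
  define w where "w = \<lfloor>2^m * v\<rfloor>"
  have w0: "0 \<le> w" unfolding w_def using v by simp
  have w1: "w < 2^m"
  proof -
    have "2^m * v < 2^m" using v by simp
    then show ?thesis unfolding w_def by (simp add: floor_less_iff)
  qed
  obtain e :: nat where e: "d = real e" "e \<le> 1" using d by (metis of_nat_0 of_nat_1 zero_le_one order_refl)
  have "2^(Suc m) * ((d + v) / 2) = of_int (int e * 2^m) + 2^m * v"
    using e by (simp add: algebra_simps)
  then have fl: "\<lfloor>2^(Suc m) * ((d + v) / 2)\<rfloor> = int e * 2^m + w"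
    unfolding w_def by (metis floor_add_int add.commute)
  have "(d + v) / 2 \<in> Dy (Suc m) i \<longleftrightarrow> int e * 2^m + w = int i"
    using fl Dy_floor by simp
  also have "\<dots> \<longleftrightarrow> e = i div 2^m \<and> w = int (i mod 2^m)"
  proof
    assume h: "int e * 2^m + w = int i"
    then obtain wn :: nat where wn: "w = int wn" using w0 by (metis nonneg_eq_int)
    have "e * 2^m + wn = i" using h wn by (metis of_nat_add of_nat_mult of_nat_numeral of_nat_power of_nat_eq_iff)
    moreover have "wn < 2^m" using w1 wn by simp
    ultimately show "e = i div 2^m \<and> w = int (i mod 2^m)"
      using wn by (auto simp: div_mult_self_is_m)
  next
    assume "e = i div 2^m \<and> w = int (i mod 2^m)"
    then show "int e * 2^m + w = int i"
      by (metis div_mult_mod_eq of_nat_add of_nat_mult of_nat_numeral of_nat_power)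
  qed
  also have "\<dots> \<longleftrightarrow> d = real (i div 2^m) \<and> v \<in> Dy m (i mod 2^m)"
    using e Dy_floor[of v m "i mod 2^m"] unfolding w_def by auto
  finally show ?thesis .
qed

lemma Zset: "{x\<in>UI. Tm x \<in> {y\<in>UI. gg y = 1}} \<in> null_sets lborel"
proof -
  have s: "{y\<in>UI. gg y = 1} \<in> sets borel" by (rule lvl_sets[OF gg_meas])
  have "{x\<in>UI. Tm x \<in> {y\<in>UI. gg y = 1}} = UI \<inter> Tm -` {y\<in>UI. gg y = 1}" by auto
  then have s2: "{x\<in>UI. Tm x \<in> {y\<in>UI. gg y = 1}} \<in> sets borel"
    using vimage_borel[OF Tm_meas s] by auto
  have "measure lborel {x\<in>UI. Tm x \<in> {y\<in>UI. gg y = 1}} = measure lborel {y\<in>UI. gg y = 1}"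
    by (rule T_pres[OF s]) auto
  then have "measure lborel {x\<in>UI. Tm x \<in> {y\<in>UI. gg y = 1}} = 0" using gg_null by simp
  then show ?thesis by (rule null_UI[OF s2, rotated]) auto
qed

lemma Q_step:
  assumes i: "i < 2^(Suc m)" and B: "B \<in> sets borel"
  shows "measure lborel (Qs (Dy (Suc m) i) B) = measure lborel (Qs B (Dy m (i mod 2^m))) / 2"
proof -
  let ?b = "real (i div 2^m)"
  have b: "?b = 0 \<or> ?b = 1"
  proof -
    have "i div 2^m < 2" using i by (simp add: less_mult_imp_div_less)
    then show ?thesis by (cases "i div 2^m") auto
  qed
  let ?Z = "{x\<in>UI. Tm x \<in> {y\<in>UI. gg y = 1}}"
  let ?S = "{x\<in>UI. d0 x = ?b \<and> Tm x \<in> Qs B (Dy m (i mod 2^m))}"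
  have QB: "Qs B (Dy m (i mod 2^m)) \<in> sets borel" by (rule Qs_sets[OF B]) simp
  have eq: "x \<in> Qs (Dy (Suc m) i) B \<longleftrightarrow> x \<in> ?S" if x: "x \<in> UI" "x \<notin> ?Z" for x
  proof -
    have v: "0 \<le> gg (Tm x)" "gg (Tm x) < 1" using gg_bounds[OF Tm_I[of x]] x Tm_I[of x] by force+
    have "ff x \<in> Dy (Suc m) i \<longleftrightarrow> d0 x = ?b \<and> gg (Tm x) \<in> Dy m (i mod 2^m)"
      unfolding ff_rec[OF x(1)] by (rule Dy_step[OF d0_01[OF x(1)] v])
    then show ?thesis unfolding Qs_def using x Tm_I[of x] gg_rec[of x] by auto
  qed
  have "measure lborel (Qs (Dy (Suc m) i) B) = measure lborel ?S"
  proof (rule measure_eq_upto_null[OF Qs_sets[OF Dy_sets B] L1_sets[OF QB] Zset])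
    show "Qs (Dy (Suc m) i) B - ?S \<subseteq> ?Z"
    proof
      fix x assume x: "x \<in> Qs (Dy (Suc m) i) B - ?S"
      then have "x \<in> UI" using Qs_sub by blast
      then show "x \<in> ?Z" using eq[of x] x by blast
    qed
    show "?S - Qs (Dy (Suc m) i) B \<subseteq> ?Z"
    proof
      fix x assume x: "x \<in> ?S - Qs (Dy (Suc m) i) B"
      then have "x \<in> UI" by blast
      then show "x \<in> ?Z" using eq[of x] x by blast
    qed
  qed
  also have "\<dots> = measure lborel (Qs B (Dy m (i mod 2^m))) / 2"
    by (rule L1[OF QB Qs_sub b])
  finally show ?thesis .
qed

lemma Q_base:
  assumes B: "B \<in> sets borel"
  shows "measure lborel (Qs UI B) = measure lborel (Qs B UI)"
proof -
  let ?F = "{y\<in>UI. ff y \<in> B}"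
  have F: "?F \<in> sets borel" "?F \<subseteq> UI"
  proof -
    have "?F = UI \<inter> ff -` B" by auto
    then show "?F \<in> sets borel" using vimage_borel[OF ff_meas B] by auto
  qed auto
  have T1: "measure lborel (Qs UI B) = measure lborel {x\<in>UI. Tm x \<in> ?F}"
  proof (rule measure_eq_upto_null[OF Qs_sets[OF _ B] _ ff_nullset])
    have "{x\<in>UI. Tm x \<in> ?F} = UI \<inter> Tm -` ?F" by auto
    then show "{x\<in>UI. Tm x \<in> ?F} \<in> sets borel" using vimage_borel[OF Tm_meas F(1)] by auto
    show "Qs UI B - {x\<in>UI. Tm x \<in> ?F} \<subseteq> {x\<in>UI. ff x = 1}"
      unfolding Qs_def using gg_rec Tm_I by auto
    show "{x\<in>UI. Tm x \<in> ?F} - Qs UI B \<subseteq> {x\<in>UI. ff x = 1}"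
      unfolding Qs_def using gg_rec Tm_I ff_bounds by fastforce
  qed simp
  have T2: "measure lborel {x\<in>UI. Tm x \<in> ?F} = measure lborel ?F" by (rule T_pres[OF F])
  have T3: "measure lborel ?F = measure lborel (Qs B UI)"
  proof (rule measure_eq_upto_null[OF F(1) Qs_sets[OF B] gg_nullset])
    show "?F - Qs B UI \<subseteq> {x\<in>UI. gg x = 1}" unfolding Qs_def using gg_bounds by fastforce
    show "Qs B UI - ?F \<subseteq> {x\<in>UI. gg x = 1}" unfolding Qs_def by auto
  qed simp
  show ?thesis using T1 T2 T3 by simp
qed

lemma Dy0: "Dy 0 0 = UI" unfolding Dy_def by simp

lemma Q00: "measure lborel (Qs UI UI) = 1"
proof -
  have "measure lborel (Qs UI UI) = measure lborel UI"
  proof (rule measure_eq_upto_null[OF Qs_sets _ null_sets.Un[OF ff_nullset gg_nullset]])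
    show "Qs UI UI - UI \<subseteq> {x\<in>UI. ff x = 1} \<union> {x\<in>UI. gg x = 1}" unfolding Qs_def by auto
    show "UI - Qs UI UI \<subseteq> {x\<in>UI. ff x = 1} \<union> {x\<in>UI. gg x = 1}" unfolding Qs_def
      using ff_bounds gg_bounds by fastforce
  qed auto
  then show ?thesis by simp
qed

lemma Q_dyadic:
  "\<forall>m k i j. m + k = n \<longrightarrow> i < 2^m \<longrightarrow> j < 2^k \<longrightarrow> measure lborel (Qs (Dy m i) (Dy k j)) = 1 / 2^(m+k)"
proof (induction n)
  case 0
  then show ?case using Q00 Dy0 by simp
next
  case (Suc n)
  have pos: "measure lborel (Qs (Dy (Suc m) i) (Dy k j)) = 1 / 2^(Suc m + k)"
    if "m + k = n" "i < 2^(Suc m)" "j < 2^k" for m k i j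
  proof -
    have "i mod 2^m < 2^m" by simp
    then have "measure lborel (Qs (Dy k j) (Dy m (i mod 2^m))) = 1 / 2^(k+m)"
      using Suc.IH that by (simp add: add.commute)
    then show ?thesis using Q_step[OF that(2) Dy_sets[of k j]] by (simp add: add.commute)
  qed
  show ?case
  proof (intro allI impI)
    fix m k :: nat and i j :: nat assume mk: "m + k = Suc n" and ij: "i < 2^m" "j < 2^k"
    show "measure lborel (Qs (Dy m i) (Dy k j)) = 1 / 2^(m+k)"
    proof (cases m)
      case (Suc m')
      then show ?thesis using pos[of m' k i j] mk ij by simp
    next
      case 0
      then have k: "k = Suc n" "i = 0" using mk ij by auto
      have "measure lborel (Qs (Dy m i) (Dy k j)) = measure lborel (Qs (Dy k j) UI)"
        using Q_base[OF Dy_sets, of k j] 0 k Dy0 by simp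
      also have "\<dots> = 1 / 2^(Suc n + 0)" using pos[of n 0 j 0] k ij Dy0 by simp
      finally show ?thesis using 0 k by simp
    qed
  qed
qed

lemma UI_sets[measurable]: "UI \<in> sets borel" by simp

lemma space_unitI[simp]: "space unitI = UI"
  unfolding unitI_def by simp

lemma sets_unitI_iff: "A \<in> sets unitI \<longleftrightarrow> A \<in> sets borel \<and> A \<subseteq> UI"
proof
  assume "A \<in> sets unitI"
  then obtain B where "B \<in> sets borel" "A = UI \<inter> B" unfolding unitI_def sets_restrict_space by auto
  then show "A \<in> sets borel \<and> A \<subseteq> UI" by auto
next
  assume "A \<in> sets borel \<and> A \<subseteq> UI"
  then have "A = UI \<inter> A" "A \<in> sets lborel" by auto
  then show "A \<in> sets unitI" unfolding unitI_def sets_restrict_space by blast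
qed

lemma emeasure_unitI: "A \<subseteq> UI \<Longrightarrow> emeasure unitI A = emeasure lborel A"
  unfolding unitI_def by (rule emeasure_restrict_space) auto

lemma measure_unitI: "A \<subseteq> UI \<Longrightarrow> measure unitI A = measure lborel A"
  by (simp add: measure_def emeasure_unitI)

lemma prob_unitI: "prob_space unitI"
  by (rule prob_spaceI) (simp add: emeasure_unitI)

definition Gen :: "real set set" where
  "Gen = {{0..<real i / 2^m} | m i. i \<le> 2^m}"

lemma Gen_sub: "Gen \<subseteq> Pow UI"
proof
  fix A assume "A \<in> Gen"
  then obtain m i where A: "A = {0..<real i / 2^m}" "i \<le> 2^m" unfolding Gen_def by auto
  have "real i / 2^m \<le> 1" using A(2) by (simp add: divide_le_eq)
  then show "A \<in> Pow UI" using A by auto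
qed

lemma UI_Gen: "UI \<in> Gen"
  unfolding Gen_def by (rule CollectI, rule exI[of _ 0], rule exI[of _ 1]) simp

lemma empty_Gen: "{} \<in> Gen"
  unfolding Gen_def by (rule CollectI, rule exI[of _ 0], rule exI[of _ 0]) simp

lemma lessThan_in_Gen_sigma: "UI \<inter> {..<c} \<in> sigma_sets UI Gen"
proof (cases "c \<le> 0")
  case True
  then have "UI \<inter> {..<c} = {}" by auto
  then show ?thesis using empty_Gen by (simp add: sigma_sets.Basic)
next
  case False
  show ?thesis
  proof (cases "1 \<le> c")
    case True
    then have "UI \<inter> {..<c} = UI" by auto
    then show ?thesis using UI_Gen by (simp add: sigma_sets.Basic)
  next
    case c1: False
    define A where "A n = {0..<real (nat \<lfloor>2^n * c\<rfloor>) / 2^n}" for n :: nat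
    have AG: "A n \<in> Gen" for n
    proof -
      have "\<lfloor>2^n * c\<rfloor> \<le> 2^n"
      proof -
        have "2^n * c \<le> 2^n" using c1 by simp
        then show ?thesis by (metis floor_mono floor_of_nat of_nat_numeral of_nat_power)
      qed
      then have "nat \<lfloor>2^n * c\<rfloor> \<le> 2^n" by (simp add: nat_le_iff)
      then show ?thesis unfolding A_def Gen_def by blast
    qed
    have "UI \<inter> {..<c} = (\<Union>n. A n)"
    proof (intro set_eqI iffI)
      fix x assume x: "x \<in> UI \<inter> {..<c}"
      then have "0 < c - x" by auto
      obtain n :: nat where n: "1 / (c - x) < 2^n" using real_arch_pow[of 2 "1/(c-x)"] by auto
      then have "1 < 2^n * (c - x)" using \<open>0 < c - x\<close> by (simp add: field_simps)
      then have "2^n * x < of_int \<lfloor>2^n * c\<rfloor>" by (simp add: algebra_simps) linarith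
      moreover have "0 \<le> \<lfloor>2^n * c\<rfloor>" using False by simp
      ultimately have "x < real (nat \<lfloor>2^n * c\<rfloor>) / 2^n" by (simp add: field_simps)
      then show "x \<in> (\<Union>n. A n)" using x unfolding A_def by auto
    next
      fix x assume "x \<in> (\<Union>n. A n)"
      then obtain n where x: "0 \<le> x" "x < real (nat \<lfloor>2^n * c\<rfloor>) / 2^n" unfolding A_def by auto
      have "0 \<le> \<lfloor>2^n * c\<rfloor>" using False by simp
      then have "real (nat \<lfloor>2^n * c\<rfloor>) \<le> 2^n * c" by simp
      then have "real (nat \<lfloor>2^n * c\<rfloor>) / 2^n \<le> c" by (simp add: divide_le_eq mult.commute)
      then show "x \<in> UI \<inter> {..<c}" using x c1 by auto
    qed
    moreover have "(\<Union>n. A n) \<in> sigma_sets UI Gen"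
      by (rule sigma_sets.Union) (rule sigma_sets.Basic[OF AG])
    ultimately show ?thesis by simp
  qed
qed

lemma sets_unitI_Gen: "sets unitI = sigma_sets UI Gen"
proof -
  have "sets unitI = (\<inter>) UI ` sets borel" unfolding unitI_def sets_restrict_space by simp
  also have bI: "sets (borel::real measure) = sigma_sets UNIV (range lessThan)"
  proof -
    have "(borel::real measure) = sigma UNIV (range lessThan)" by (rule borel_Iio)
    moreover have "sets (sigma UNIV (range lessThan)) = sigma_sets UNIV (range (lessThan::real \<Rightarrow> real set))"
      by (rule sets_measure_of) auto
    ultimately show ?thesis by simp
  qed
  also have "(\<inter>) UI ` sigma_sets UNIV (range lessThan) = sigma_sets UI ((\<inter>) UI ` range lessThan)"
  proof (rule sigma_sets_Int)
    have "UI \<in> sets borel" by simp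
    then show "UI \<in> sigma_sets UNIV (range lessThan)" using bI by simp
  qed simp
  also have "sigma_sets UI ((\<inter>) UI ` range lessThan) = sigma_sets UI Gen"
  proof
    show "sigma_sets UI ((\<inter>) UI ` range lessThan) \<subseteq> sigma_sets UI Gen"
      by (rule sigma_sets_mono) (auto intro: lessThan_in_Gen_sigma)
    show "sigma_sets UI Gen \<subseteq> sigma_sets UI ((\<inter>) UI ` range lessThan)"
    proof (rule sigma_sets_mono, rule subsetI)
      fix A assume "A \<in> Gen"
      then obtain m i where A: "A = {0..<real i / 2^m}" "i \<le> 2^m" unfolding Gen_def by auto
      have le1: "real i / 2^m \<le> 1" using A(2) by (simp add: divide_le_eq)
      have "A = UI \<inter> {..<real i / 2^m}" unfolding A(1) using order.strict_trans2[OF _ le1] by auto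
      then show "A \<in> sigma_sets UI ((\<inter>) UI ` range lessThan)" by (auto intro: sigma_sets.Basic)
    qed
  qed
  finally show ?thesis .
qed

lemma lowint: assumes "0 \<le> v" shows "v < real i / 2^m \<longleftrightarrow> (\<exists>i'<i. v \<in> Dy m i')"
proof -
  have p: "(0::real) < 2^m" by simp
  have "v < real i / 2^m \<longleftrightarrow> 2^m * v < real i" using p by (simp add: less_divide_eq mult.commute)
  also have "\<dots> \<longleftrightarrow> \<lfloor>2^m * v\<rfloor> < int i" by (simp add: floor_less_iff)
  also have "\<dots> \<longleftrightarrow> (\<exists>i'<i. \<lfloor>2^m * v\<rfloor> = int i')"
  proof -
    have "0 \<le> \<lfloor>2^m * v\<rfloor>" using assms by simp
    then show ?thesis by (metis nonneg_int_cases of_nat_less_iff)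
  qed
  finally show ?thesis using Dy_floor by simp
qed

lemma Dy_disj: "i \<noteq> i' \<Longrightarrow> v \<in> Dy m i \<Longrightarrow> v \<notin> Dy m i'"
  using Dy_floor by simp

lemma Qs_rect:
  assumes i: "i \<le> 2^m" and j: "j \<le> 2^k"
  shows "measure lborel (Qs {0..<real i / 2^m} {0..<real j / 2^k}) = real i * real j / 2^(m+k)"
proof -
  let ?F = "\<lambda>p. Qs (Dy m (fst p)) (Dy k (snd p))"
  have eq: "Qs {0..<real i / 2^m} {0..<real j / 2^k} = (\<Union>p\<in>{..<i}\<times>{..<j}. ?F p)"
  proof (intro set_eqI iffI)
    fix x assume x: "x \<in> Qs {0..<real i / 2^m} {0..<real j / 2^k}"
    then have xu: "x \<in> UI" unfolding Qs_def by auto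
    obtain i' where i': "i' < i" "ff x \<in> Dy m i'" using lowint[of "ff x" i m] x ff_bounds[OF xu] unfolding Qs_def by auto
    obtain j' where j': "j' < j" "gg x \<in> Dy k j'" using lowint[of "gg x" j k] x gg_bounds[OF xu] unfolding Qs_def by auto
    show "x \<in> (\<Union>p\<in>{..<i}\<times>{..<j}. ?F p)" using i' j' xu unfolding Qs_def by force
  next
    fix x assume "x \<in> (\<Union>p\<in>{..<i}\<times>{..<j}. ?F p)"
    then obtain i' j' where x: "i' < i" "j' < j" "x \<in> UI" "ff x \<in> Dy m i'" "gg x \<in> Dy k j'" unfolding Qs_def by auto
    have "ff x < real i / 2^m" using lowint[of "ff x" i m] x ff_bounds[OF x(3)] by auto
    moreover have "gg x < real j / 2^k" using lowint[of "gg x" j k] x gg_bounds[OF x(3)] by auto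
    ultimately show "x \<in> Qs {0..<real i / 2^m} {0..<real j / 2^k}" using x ff_bounds[OF x(3)] gg_bounds[OF x(3)] unfolding Qs_def by auto
  qed
  have "measure lborel (\<Union>p\<in>{..<i}\<times>{..<j}. ?F p) = (\<Sum>p\<in>{..<i}\<times>{..<j}. measure lborel (?F p))"
  proof (rule measure_UNION')
    show "?F p \<in> fmeasurable lborel" for p by (rule UI_fmeas[OF Qs_sets Qs_sub]) auto
    show "pairwise (\<lambda>p q. disjnt (?F p) (?F q)) ({..<i}\<times>{..<j})"
      unfolding pairwise_def disjnt_def Qs_def using Dy_disj by (auto simp: prod_eq_iff)
  qed simp
  also have "\<dots> = (\<Sum>p\<in>{..<i}\<times>{..<j}. 1 / 2^(m+k))"
  proof (rule sum.cong)
    fix p assume "p \<in> {..<i}\<times>{..<j}"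
    then have "fst p < 2^m" "snd p < 2^k" using i j by auto
    then show "measure lborel (?F p) = 1 / 2^(m+k)" using Q_dyadic[of "m+k"] by blast
  qed simp
  also have "\<dots> = real i * real j / 2^(m+k)" by simp
  finally show ?thesis using eq by simp
qed

definition h1 :: "real \<Rightarrow> real" where "h1 x = (if ff x < 1 \<and> gg x < 1 then ff x else 0)"
definition h2 :: "real \<Rightarrow> real" where "h2 x = (if ff x < 1 \<and> gg x < 1 then gg x else 0)"

lemma h1_meas[measurable]: "h1 \<in> borel_measurable borel" unfolding h1_def[abs_def] by measurable
lemma h2_meas[measurable]: "h2 \<in> borel_measurable borel" unfolding h2_def[abs_def] by measurable

lemma h1_UI: "x \<in> UI \<Longrightarrow> h1 x \<in> UI" unfolding h1_def using ff_bounds by auto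
lemma h2_UI: "x \<in> UI \<Longrightarrow> h2 x \<in> UI" unfolding h2_def using gg_bounds by auto

lemma h1_unitI: "h1 \<in> measurable unitI unitI"
  unfolding unitI_def
  by (rule measurable_restrict_space2, use h1_UI in auto) (rule measurable_restrict_space1, simp)
lemma h2_unitI: "h2 \<in> measurable unitI unitI"
  unfolding unitI_def
  by (rule measurable_restrict_space2, use h2_UI in auto) (rule measurable_restrict_space1, simp)

definition hh :: "real \<Rightarrow> real \<times> real" where "hh x = (h1 x, h2 x)"

lemma hh_meas: "hh \<in> measurable unitI (unitI \<Otimes>\<^sub>M unitI)"
  unfolding hh_def using h1_unitI h2_unitI by (rule measurable_Pair)

lemma hh_rect:
  assumes "A \<in> sets borel" "B \<in> sets borel"
  shows "measure lborel (hh -` (A \<times> B) \<inter> UI) = measure lborel (Qs A B)"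
proof (rule measure_eq_upto_null[OF _ Qs_sets[OF assms] null_sets.Un[OF ff_nullset gg_nullset]])
  have "hh -` (A \<times> B) \<inter> UI = UI \<inter> h1 -` A \<inter> h2 -` B" unfolding hh_def by auto
  then show "hh -` (A \<times> B) \<inter> UI \<in> sets borel"
    using vimage_borel[OF h1_meas assms(1)] vimage_borel[OF h2_meas assms(2)] by auto
  show "hh -` (A \<times> B) \<inter> UI - Qs A B \<subseteq> {x\<in>UI. ff x = 1} \<union> {x\<in>UI. gg x = 1}"
    unfolding hh_def h1_def h2_def Qs_def using ff_bounds gg_bounds by fastforce
  show "Qs A B - hh -` (A \<times> B) \<inter> UI \<subseteq> {x\<in>UI. ff x = 1} \<union> {x\<in>UI. gg x = 1}"
    unfolding hh_def h1_def h2_def Qs_def using ff_bounds gg_bounds by fastforce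
qed

lemma Gen_Int: "a \<in> Gen \<Longrightarrow> b \<in> Gen \<Longrightarrow> a \<inter> b \<in> Gen"
proof -
  assume "a \<in> Gen" "b \<in> Gen"
  then obtain m i m' i' where a: "a = {0..<real i / 2^m}" "i \<le> 2^m" and b: "b = {0..<real i' / 2^m'}" "i' \<le> 2^m'"
    unfolding Gen_def by auto
  show ?thesis
  proof (cases "real i / 2^m \<le> real i' / 2^m'")
    case True
    then have "a \<inter> b = a" using a b by auto
    then show ?thesis using \<open>a \<in> Gen\<close> by simp
  next
    case False
    then have "a \<inter> b = b" using a b by auto
    then show ?thesis using \<open>b \<in> Gen\<close> by simp
  qed
qed

definition GenP :: "(real \<times> real) set set" where
  "GenP = {a \<times> b | a b. a \<in> Gen \<and> b \<in> Gen}"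

lemma GenP_Int_stable: "Int_stable GenP"
  unfolding Int_stable_def GenP_def
proof (safe)
  fix a b a' b' assume "a \<in> Gen" "b \<in> Gen" "a' \<in> Gen" "b' \<in> Gen"
  then show "\<exists>c d. a \<times> b \<inter> a' \<times> b' = c \<times> d \<and> c \<in> Gen \<and> d \<in> Gen"
    by (intro exI[of _ "a \<inter> a'"] exI[of _ "b \<inter> b'"]) (auto intro: Gen_Int)
qed

lemma sets_UU: "sets (unitI \<Otimes>\<^sub>M unitI) = sigma_sets (UI \<times> UI) GenP"
proof -
  have "sets (unitI \<Otimes>\<^sub>M unitI) = sets (sigma (space unitI \<times> space unitI) {a \<times> b | a b. a \<in> Gen \<and> b \<in> Gen})"
    by (rule sets_pair_eq[where Ca="{UI}" and Cb="{UI}"]) (use Gen_sub sets_unitI_Gen UI_Gen in auto)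
  also have "\<dots> = sigma_sets (UI \<times> UI) GenP"
    unfolding GenP_def using Gen_sub by (subst sets_measure_of) auto
  finally show ?thesis .
qed

lemma prob_UU: "prob_space (unitI \<Otimes>\<^sub>M unitI)"
  using prob_unitI by (simp add: prob_space_pair)

lemma Gen_emeasure: "a \<in> Gen \<Longrightarrow> \<exists>m i. a = {0..<real i / 2^m} \<and> i \<le> 2^m" unfolding Gen_def by auto

lemma hh_distr: "distr unitI (unitI \<Otimes>\<^sub>M unitI) hh = unitI \<Otimes>\<^sub>M unitI"
proof (rule measure_eqI_generator_eq[OF GenP_Int_stable, where \<Omega>="UI \<times> UI" and A="\<lambda>_. UI \<times> UI"])
  show "GenP \<subseteq> Pow (UI \<times> UI)" unfolding GenP_def using Gen_sub by auto
  show "sets (distr unitI (unitI \<Otimes>\<^sub>M unitI) hh) = sigma_sets (UI \<times> UI) GenP" using sets_UU by simp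
  show "sets (unitI \<Otimes>\<^sub>M unitI) = sigma_sets (UI \<times> UI) GenP" by (rule sets_UU)
  show "range (\<lambda>_. UI \<times> UI) \<subseteq> GenP" unfolding GenP_def using UI_Gen by auto
  show "(\<Union>i. UI \<times> UI) = UI \<times> UI" by simp
  interpret U: prob_space "unitI" by (rule prob_unitI)
  interpret UU: prob_space "distr unitI (unitI \<Otimes>\<^sub>M unitI) hh"
    by (rule U.prob_space_distr[OF hh_meas])
  show "emeasure (distr unitI (unitI \<Otimes>\<^sub>M unitI) hh) (UI \<times> UI) \<noteq> \<infinity>" for i
    by simp
  fix X assume "X \<in> GenP"
  then obtain a b where X: "X = a \<times> b" "a \<in> Gen" "b \<in> Gen" unfolding GenP_def by auto
  obtain m i where a: "a = {0..<real i / 2^m}" "i \<le> 2^m" using Gen_emeasure[OF X(2)] by auto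
  obtain k j where b: "b = {0..<real j / 2^k}" "j \<le> 2^k" using Gen_emeasure[OF X(3)] by auto
  have ab: "a \<in> sets unitI" "b \<in> sets unitI" using X Gen_sub sets_unitI_Gen by auto
  have absub: "a \<subseteq> UI" "b \<subseteq> UI" using X Gen_sub by auto
  have XS: "X \<in> sets (unitI \<Otimes>\<^sub>M unitI)" using X ab by auto
  have "emeasure (distr unitI (unitI \<Otimes>\<^sub>M unitI) hh) X = emeasure unitI (hh -` X \<inter> UI)"
    using XS by (simp add: emeasure_distr[OF hh_meas])
  also have "\<dots> = emeasure lborel (hh -` X \<inter> UI)" by (rule emeasure_unitI) auto
  also have "\<dots> = ennreal (measure lborel (hh -` X \<inter> UI))"
  proof -
    have "hh -` X \<inter> UI \<in> sets unitI" using XS hh_meas by (metis measurable_sets space_unitI)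
    then have "hh -` X \<inter> UI \<in> sets borel" by (simp add: sets_unitI_iff)
    then have fin: "emeasure lborel (hh -` X \<inter> UI) \<noteq> \<infinity>" by (rule UI_fin) auto
    show ?thesis by (rule emeasure_eq_ennreal_measure) (use fin in simp)
  qed
  also have "measure lborel (hh -` X \<inter> UI) = real i * real j / 2^(m+k)"
    using hh_rect[of a b] Qs_rect[OF a(2) b(2)] X a b by simp
  finally have L: "emeasure (distr unitI (unitI \<Otimes>\<^sub>M unitI) hh) X = ennreal (real i * real j / 2^(m+k))" .
  have "emeasure (unitI \<Otimes>\<^sub>M unitI) X = emeasure unitI a * emeasure unitI b"
    using X(1) U.emeasure_pair_measure_Times[OF ab] by simp
  also have "\<dots> = ennreal (real i / 2^m) * ennreal (real j / 2^k)"
  proof -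
    have "real i / 2^m \<ge> 0" "real j / 2^k \<ge> 0" by auto
    then show ?thesis using a b by (simp add: emeasure_unitI)
  qed
  also have "\<dots> = ennreal (real i * real j / 2^(m+k))"
    by (simp add: ennreal_mult'[symmetric] power_add)
  finally show "emeasure (distr unitI (unitI \<Otimes>\<^sub>M unitI) hh) X = emeasure (unitI \<Otimes>\<^sub>M unitI) X"
    using L by simp
qed

lemma prod_param:
  assumes p1: "parameter M1 \<phi>" and p2: "parameter M2 \<psi>" and sf: "sigma_finite_measure M2"
  shows "parameter (M1 \<Otimes>\<^sub>M M2) (\<lambda>s. (\<phi> (h1 s), \<psi> (h2 s)))"
proof -
  have m1: "\<phi> \<in> measurable unitI M1" and d1: "distr unitI M1 \<phi> = M1" using p1 unfolding parameter_def by auto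
  have m2: "\<psi> \<in> measurable unitI M2" and d2: "distr unitI M2 \<psi> = M2" using p2 unfolding parameter_def by auto
  have mm: "(\<lambda>(x, y). (\<phi> x, \<psi> y)) \<in> measurable (unitI \<Otimes>\<^sub>M unitI) (M1 \<Otimes>\<^sub>M M2)"
    using m1 m2 by measurable
  have comp: "(\<lambda>s. (\<phi> (h1 s), \<psi> (h2 s))) = (\<lambda>(x, y). (\<phi> x, \<psi> y)) \<circ> hh"
    unfolding hh_def by auto
  have meas: "(\<lambda>s. (\<phi> (h1 s), \<psi> (h2 s))) \<in> measurable unitI (M1 \<Otimes>\<^sub>M M2)"
    unfolding comp by (rule measurable_comp[OF hh_meas mm])
  have "distr unitI (M1 \<Otimes>\<^sub>M M2) (\<lambda>s. (\<phi> (h1 s), \<psi> (h2 s)))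
      = distr (distr unitI (unitI \<Otimes>\<^sub>M unitI) hh) (M1 \<Otimes>\<^sub>M M2) (\<lambda>(x, y). (\<phi> x, \<psi> y))"
    unfolding comp by (rule distr_distr[OF mm hh_meas, symmetric])
  also have "\<dots> = distr (unitI \<Otimes>\<^sub>M unitI) (M1 \<Otimes>\<^sub>M M2) (\<lambda>(x, y). (\<phi> x, \<psi> y))"
    by (simp add: hh_distr)
  also have "\<dots> = distr unitI M1 \<phi> \<Otimes>\<^sub>M distr unitI M2 \<psi>"
    by (rule pair_measure_distr[OF m1 m2, symmetric]) (simp add: d2 sf)
  also have "\<dots> = M1 \<Otimes>\<^sub>M M2" by (simp add: d1 d2)
  finally show ?thesis unfolding parameter_def using meas by simp
qed

definition Fq :: "real \<Rightarrow> real \<Rightarrow> real \<Rightarrow> real" where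
  "Fq q x y = (x powr q + y powr q) powr (1/q)"

lemma powr_inv_cancel: "0 \<le> (s::real) \<Longrightarrow> (q::real) > 0 \<Longrightarrow> (s powr (1/q)) powr q = s"
  by (simp add: powr_powr)

lemma powr_inv_cancel2: "0 \<le> (s::real) \<Longrightarrow> (q::real) > 0 \<Longrightarrow> (s powr q) powr (1/q) = s"
  by (simp add: powr_powr)

lemma Fq_nonneg: "0 \<le> Fq q x y" unfolding Fq_def by simp

lemma Fq_pow: "q > 0 \<Longrightarrow> (Fq q x y) powr q = x powr q + y powr q"
  unfolding Fq_def by (rule powr_inv_cancel) auto

lemma Fq_ge: assumes "q \<ge> 1" "0 \<le> x" "0 \<le> y" shows "max x y \<le> Fq q x y"
proof -
  have "x = (x powr q) powr (1/q)" "y = (y powr q) powr (1/q)" using assms by (simp_all add: powr_inv_cancel2)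
  moreover have "(x powr q) powr (1/q) \<le> Fq q x y" "(y powr q) powr (1/q) \<le> Fq q x y"
    unfolding Fq_def using assms by (auto intro!: powr_mono2)
  ultimately show ?thesis by (metis max.bounded_iff)
qed

lemma Fq_le: assumes "q \<ge> 1" "0 \<le> x" "0 \<le> y" shows "Fq q x y \<le> 2 powr (1/q) * max x y"
proof -
  let ?M = "max x y"
  have "x powr q + y powr q \<le> 2 * ?M powr q"
    using assms powr_mono2[of q x ?M] powr_mono2[of q y ?M] by auto
  then have "Fq q x y \<le> (2 * ?M powr q) powr (1/q)" unfolding Fq_def using assms by (intro powr_mono2) auto
  also have "\<dots> = 2 powr (1/q) * ?M" using assms by (simp add: powr_mult powr_inv_cancel2)
  finally show ?thesis .
qed

lemma Fq_mono: assumes "q \<ge> 1" "0 \<le> x" "x \<le> x'" "0 \<le> y" "y \<le> y'" shows "Fq q x y \<le> Fq q x' y'"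
  unfolding Fq_def using assms by (intro powr_mono2 add_mono) auto

lemma conv_powr:
  fixes q a b l :: real
  assumes q: "q \<ge> 1" and a: "0 \<le> a" and b: "0 \<le> b" and l: "0 \<le> l" "l \<le> 1"
  shows "(l * a + (1 - l) * b) powr q \<le> l * a powr q + (1 - l) * b powr q"
proof (cases "a = 0 \<or> b = 0")
  case True
  have p1: "l powr q \<le> l" using powr_mono'[of 1 q l] l q by simp
  have p2: "(1-l) powr q \<le> 1 - l" using powr_mono'[of 1 q "1-l"] l q by simp
  show ?thesis
  proof (cases "a = 0")
    case True
    then show ?thesis using p2 b by (simp add: powr_mult mult_right_mono)
  next
    case False
    then have "b = 0" using \<open>a = 0 \<or> b = 0\<close> by simp
    then show ?thesis using p1 a by (simp add: powr_mult mult_right_mono)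
  qed
next
  case False
  then have "a \<in> {0<..}" "b \<in> {0<..}" using a b by auto
  then show ?thesis using convex_onD[OF powr_convex[OF q], of "1-l" a b] l by simp
qed

lemma Fq_minkowski:
  assumes q: "q \<ge> 1" and nn: "0 \<le> x" "0 \<le> y" "0 \<le> u" "0 \<le> v"
  shows "Fq q (x + u) (y + v) \<le> Fq q x y + Fq q u v"
proof -
  define A where "A = Fq q x y"
  define C where "C = Fq q u v"
  have A0: "A \<ge> 0" "C \<ge> 0" unfolding A_def C_def by (simp_all add: Fq_nonneg)
  show ?thesis
  proof (cases "A = 0 \<or> C = 0")
    case True
    show ?thesis
    proof (cases "A = 0")
      case True
      then have "x = 0" "y = 0" using Fq_ge[OF q nn(1,2)] nn unfolding A_def by auto
      then show ?thesis by (simp add: Fq_nonneg)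
    next
      case False
      then have "C = 0" using True by simp
      then have "u = 0" "v = 0" using Fq_ge[OF q nn(3,4)] nn unfolding C_def by auto
      then show ?thesis by (simp add: Fq_nonneg)
    qed
  next
    case False
    then have Ap: "A > 0" "C > 0" using A0 by auto
    define l where "l = A / (A + C)"
    have l: "0 \<le> l" "l \<le> 1" "1 - l = C / (A + C)" using Ap unfolding l_def by (auto simp: field_simps)
    have q0: "q > 0" using q by simp
    have lA: "l * (z / A) = z / (A + C)" for z unfolding l_def using Ap by (simp add: field_simps)
    have lC: "(1 - l) * (z / C) = z / (A + C)" for z unfolding l(3) using Ap by (simp add: field_simps)
    have e1: "(x + u) / (A + C) = l * (x / A) + (1 - l) * (u / C)"
      unfolding lA lC by (simp add: add_divide_distrib)
    have e2: "(y + v) / (A + C) = l * (y / A) + (1 - l) * (v / C)"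
      unfolding lA lC by (simp add: add_divide_distrib)
    have nA: "(x / A) powr q + (y / A) powr q = 1"
    proof -
      have "(x / A) powr q + (y / A) powr q = (x powr q + y powr q) / A powr q"
        by (simp add: powr_divide add_divide_distrib)
      also have "A powr q = x powr q + y powr q" unfolding A_def by (rule Fq_pow[OF q0])
      finally show ?thesis using Ap q0
        by (metis A_def Fq_pow divide_self powr_gt_zero order_less_irrefl)
    qed
    have nC: "(u / C) powr q + (v / C) powr q = 1"
    proof -
      have "(u / C) powr q + (v / C) powr q = (u powr q + v powr q) / C powr q"
        by (simp add: powr_divide add_divide_distrib)
      also have "C powr q = u powr q + v powr q" unfolding C_def by (rule Fq_pow[OF q0])
      finally show ?thesis using Ap q0
        by (metis C_def Fq_pow divide_self powr_gt_zero order_less_irrefl)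
    qed
    have "((x + u) / (A + C)) powr q + ((y + v) / (A + C)) powr q
        \<le> (l * (x / A) powr q + (1 - l) * (u / C) powr q) + (l * (y / A) powr q + (1 - l) * (v / C) powr q)"
      unfolding e1 e2 using Ap nn l by (intro add_mono conv_powr[OF q]) auto
    also have "\<dots> = l * ((x / A) powr q + (y / A) powr q) + (1 - l) * ((u / C) powr q + (v / C) powr q)"
      by (simp add: algebra_simps)
    also have "\<dots> = 1" using nA nC by simp
    finally have le1: "((x + u) / (A + C)) powr q + ((y + v) / (A + C)) powr q \<le> 1" .
    have "(x + u) powr q + (y + v) powr q = (((x + u) / (A + C)) powr q + ((y + v) / (A + C)) powr q) * (A + C) powr q"
      using Ap by (simp add: powr_divide field_simps)
    also have "\<dots> \<le> (A + C) powr q" using le1 by (simp add: mult_left_le_one_le)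
    finally have "(x + u) powr q + (y + v) powr q \<le> (A + C) powr q" .
    then have "Fq q (x + u) (y + v) \<le> ((A + C) powr q) powr (1/q)"
      unfolding Fq_def using nn q0 by (intro powr_mono2) auto
    also have "\<dots> = A + C" using Ap q0 by (simp add: powr_inv_cancel2)
    finally show ?thesis unfolding A_def C_def .
  qed
qed

lemma Fq_zero_iff: assumes "q \<ge> 1" "0 \<le> x" "0 \<le> y" shows "Fq q x y = 0 \<longleftrightarrow> x = 0 \<and> y = 0"
proof
  assume "Fq q x y = 0" then show "x = 0 \<and> y = 0" using Fq_ge[OF assms] assms by auto
next
  assume "x = 0 \<and> y = 0" then show "Fq q x y = 0" by (simp add: Fq_def)
qed

lemma Fq_anti: assumes q: "1 \<le> q" "q \<le> q'" and nn: "0 \<le> x" "0 \<le> y"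
  shows "Fq q' x y \<le> Fq q x y"
proof (cases "x = 0 \<and> y = 0")
  case True then show ?thesis by (simp add: Fq_def)
next
  case False
  define A where "A = Fq q x y"
  have Ap: "A > 0" using False Fq_zero_iff[OF q(1) nn] Fq_nonneg[of q x y] unfolding A_def by linarith
  have q0: "q > 0" "q' > 0" using q by auto
  have xa: "x / A \<le> 1" "y / A \<le> 1" using Fq_ge[OF q(1) nn] Ap unfolding A_def by auto
  have "(x / A) powr q' + (y / A) powr q' \<le> (x / A) powr q + (y / A) powr q"
    using xa nn Ap q by (intro add_mono powr_mono') auto
  also have "\<dots> = (x powr q + y powr q) / A powr q" by (simp add: powr_divide add_divide_distrib)
  also have "\<dots> = 1"
  proof -
    have "A powr q = x powr q + y powr q" unfolding A_def by (rule Fq_pow[OF q0(1)])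
    moreover have "A powr q > 0" using Ap by simp
    ultimately show ?thesis by simp
  qed
  finally have "(x powr q' + y powr q') / A powr q' \<le> 1" by (simp add: powr_divide add_divide_distrib)
  then have "x powr q' + y powr q' \<le> A powr q'" using Ap by (simp add: divide_le_eq)
  then have "Fq q' x y \<le> (A powr q') powr (1/q')" unfolding Fq_def using q0 by (intro powr_mono2) auto
  also have "\<dots> = A" using Ap q0 by (simp add: powr_inv_cancel2)
  finally show ?thesis unfolding A_def .
qed

lemma Fq_powmean: assumes q: "1 \<le> q" "q \<le> q'" and nn: "0 \<le> x" "0 \<le> y"
  shows "Fq q x y \<le> 2 powr (1/q - 1/q') * Fq q' x y"
proof -
  have q0: "q > 0" "q' > 0" using q by auto
  define s where "s = q' / q"
  have s1: "s \<ge> 1" unfolding s_def using q by simp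
  have "((1/2) * x powr q + (1 - 1/2) * y powr q) powr s \<le> (1/2) * (x powr q) powr s + (1 - 1/2) * (y powr q) powr s"
    by (rule conv_powr[OF s1]) auto
  moreover have "(x powr q) powr s = x powr q'" "(y powr q) powr s = y powr q'"
    unfolding s_def using q0 by (simp_all add: powr_powr)
  ultimately have "((x powr q + y powr q) / 2) powr s \<le> (x powr q' + y powr q') / 2"
    by (simp add: field_simps)
  then have "(((x powr q + y powr q) / 2) powr s) powr (1/q') \<le> ((x powr q' + y powr q') / 2) powr (1/q')"
    using q0 by (intro powr_mono2) auto
  moreover have "(((x powr q + y powr q) / 2) powr s) powr (1/q') = ((x powr q + y powr q) / 2) powr (1/q)"
    unfolding s_def using q0 by (simp add: powr_powr)
  ultimately have "((x powr q + y powr q) / 2) powr (1/q) \<le> ((x powr q' + y powr q') / 2) powr (1/q')" by simp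
  then have "Fq q x y / 2 powr (1/q) \<le> Fq q' x y / 2 powr (1/q')"
    unfolding Fq_def by (simp add: powr_divide)
  then have "Fq q x y \<le> 2 powr (1/q) * (Fq q' x y / 2 powr (1/q'))"
    by (simp add: divide_le_eq mult.commute)
  also have "\<dots> = 2 powr (1/q - 1/q') * Fq q' x y" by (simp add: powr_diff)
  finally show ?thesis .
qed

definition Gr :: "real \<Rightarrow> real \<Rightarrow> real \<Rightarrow> real" where
  "Gr r x y = (if r = 0 then max x y else Fq (1/r) x y)"

lemma Gr_ge: assumes "0 \<le> r" "r \<le> 1" "0 \<le> x" "0 \<le> y" shows "max x y \<le> Gr r x y"
proof (cases "r = 0")
  case True then show ?thesis by (simp add: Gr_def)
next
  case False
  then have "1 \<le> 1/r" using assms by simp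
  then show ?thesis using Fq_ge[of "1/r" x y] assms False by (simp add: Gr_def)
qed

lemma Gr_nonneg: "0 \<le> r \<Longrightarrow> r \<le> 1 \<Longrightarrow> 0 \<le> x \<Longrightarrow> 0 \<le> y \<Longrightarrow> 0 \<le> Gr r x y"
  using Gr_ge[of r x y] by linarith

lemma Gr_le: assumes "0 \<le> r" "r \<le> 1" "0 \<le> x" "0 \<le> y" shows "Gr r x y \<le> 2 powr r * max x y"
proof (cases "r = 0")
  case True then show ?thesis by (simp add: Gr_def)
next
  case False then show ?thesis using Fq_le[of "1/r" x y] assms by (simp add: Gr_def)
qed

lemma Gr_le2: assumes "0 \<le> r" "r \<le> 1" "0 \<le> x" "0 \<le> y" shows "Gr r x y \<le> 2 * max x y"
proof -
  have "2 powr r \<le> 2 powr 1" using assms by (intro powr_mono) auto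
  then have "2 powr r * max x y \<le> 2 * max x y" using assms by (intro mult_right_mono) auto
  then show ?thesis using Gr_le[OF assms] by simp
qed

lemma Gr_cmp: assumes r: "0 \<le> r2" "r2 \<le> r1" "r1 \<le> 1" and nn: "0 \<le> x" "0 \<le> y"
  shows "Gr r2 x y \<le> Gr r1 x y \<and> Gr r1 x y \<le> 2 powr (r1 - r2) * Gr r2 x y"
proof (cases "r2 = 0")
  case True
  then show ?thesis using Gr_ge[of r1 x y] Gr_le[of r1 x y] r nn by (simp add: Gr_def)
next
  case False
  then have r2p: "r2 > 0" using r by simp
  have q: "1 \<le> 1/r1" "1/r1 \<le> 1/r2" using r r2p by (auto simp: field_simps)
  have "Gr r2 x y \<le> Gr r1 x y" unfolding Gr_def using r2p r Fq_anti[OF q nn] by auto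
  moreover have "Gr r1 x y \<le> 2 powr (r1 - r2) * Gr r2 x y"
    unfolding Gr_def using r2p r Fq_powmean[OF q nn] by auto
  ultimately show ?thesis ..
qed

lemma Gr_diff: assumes r: "0 \<le> r1" "r1 \<le> 1" "0 \<le> r2" "r2 \<le> 1" and nn: "0 \<le> x" "0 \<le> y"
  shows "\<bar>Gr r1 x y - Gr r2 x y\<bar> \<le> (2 powr \<bar>r1 - r2\<bar> - 1) * (2 * max x y)"
proof -
  have key: "\<bar>Gr a x y - Gr b x y\<bar> \<le> (2 powr \<bar>a - b\<bar> - 1) * (2 * max x y)"
    if ab: "0 \<le> b" "b \<le> a" "a \<le> 1" for a b
  proof -
    have c: "Gr b x y \<le> Gr a x y" "Gr a x y \<le> 2 powr (a - b) * Gr b x y" using Gr_cmp[OF ab nn] by auto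
    have f: "0 \<le> 2 powr (a - b) - 1" using ab by (simp add: ge_one_powr_ge_zero)
    have "Gr b x y \<le> 2 * max x y" using Gr_le2[of b x y] ab nn by simp
    then have "(2 powr (a - b) - 1) * Gr b x y \<le> (2 powr (a - b) - 1) * (2 * max x y)"
      using f by (rule mult_left_mono)
    moreover have "\<bar>Gr a x y - Gr b x y\<bar> = Gr a x y - Gr b x y" using c by simp
    moreover have "Gr a x y - Gr b x y \<le> (2 powr (a - b) - 1) * Gr b x y" using c by (simp add: algebra_simps)
    ultimately show ?thesis using ab by simp
  qed
  show ?thesis
  proof (cases "r2 \<le> r1")
    case True then show ?thesis using key[of r2 r1] r by simp
  next
    case False then show ?thesis using key[of r1 r2] r by (simp add: abs_minus_commute)
  qed
qed

lemma Gr_mono: assumes "0 \<le> r" "r \<le> 1" "0 \<le> x" "x \<le> x'" "0 \<le> y" "y \<le> y'" shows "Gr r x y \<le> Gr r x' y'"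
  using assms Fq_mono[of "1/r" x x' y y'] unfolding Gr_def by auto

lemma Gr_tri: assumes r: "0 \<le> r" "r \<le> 1" and nn: "0 \<le> x" "0 \<le> y" "0 \<le> u" "0 \<le> v"
  shows "Gr r (x + u) (y + v) \<le> Gr r x y + Gr r u v"
proof (cases "r = 0")
  case True then show ?thesis unfolding Gr_def by (simp add: add_mono)
next
  case False then show ?thesis unfolding Gr_def using Fq_minkowski[of "1/r" x y u v] r nn by auto
qed

lemma Gr_lip1: assumes r: "0 \<le> r" "r \<le> 1" and nn: "0 \<le> x" "0 \<le> y" "0 \<le> x'" "0 \<le> y'"
  shows "Gr r x y \<le> Gr r x' y' + 2 * max \<bar>x - x'\<bar> \<bar>y - y'\<bar>"
proof -
  have "Gr r x y \<le> Gr r (x' + \<bar>x - x'\<bar>) (y' + \<bar>y - y'\<bar>)" using r nn by (intro Gr_mono) auto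
  also have "\<dots> \<le> Gr r x' y' + Gr r \<bar>x - x'\<bar> \<bar>y - y'\<bar>" using r nn by (intro Gr_tri) auto
  also have "Gr r \<bar>x - x'\<bar> \<bar>y - y'\<bar> \<le> 2 * max \<bar>x - x'\<bar> \<bar>y - y'\<bar>" using r by (intro Gr_le2) auto
  finally show ?thesis by simp
qed

lemma Gr_lip: assumes r: "0 \<le> r" "r \<le> 1" and nn: "0 \<le> x" "0 \<le> y" "0 \<le> x'" "0 \<le> y'"
  shows "\<bar>Gr r x y - Gr r x' y'\<bar> \<le> 2 * max \<bar>x - x'\<bar> \<bar>y - y'\<bar>"
  using Gr_lip1[OF r nn] Gr_lip1[OF r nn(3,4,1,2)] by (simp add: abs_minus_commute abs_le_iff)

definition rr :: "ennreal \<Rightarrow> real" where "rr p = enn2real (inverse p)"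

lemma rr_cases: assumes p: "1 \<le> p"
  shows "(p = \<infinity> \<and> rr p = 0 \<and> inverse p = 0) \<or> (\<exists>q. q \<ge> 1 \<and> p = ennreal q \<and> rr p = 1/q \<and> inverse p = ennreal (1/q))"
proof (cases "p = \<infinity>")
  case True then show ?thesis by (simp add: rr_def)
next
  case False
  then obtain q where q: "p = ennreal q" "q \<ge> 0" by (cases p) auto
  have q1: "q \<ge> 1" using p q by simp
  have i: "inverse p = ennreal (1/q)" unfolding q(1) using q1 by (simp add: inverse_ennreal inverse_eq_divide)
  then have "rr p = 1 / q" unfolding rr_def using q1 by simp
  then show ?thesis using q q1 i by auto
qed

lemma rr_range: "1 \<le> p \<Longrightarrow> 0 \<le> rr p \<and> rr p \<le> 1"
  using rr_cases[of p] by auto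

lemma rr_inv: "1 \<le> p \<Longrightarrow> inverse p = ennreal (rr p)"
  using rr_cases[of p] by auto

lemma Fp_Gr: assumes p: "1 \<le> p" shows "Fp p s t = Gr (rr p) s t"
  using rr_cases[OF p]
proof
  assume h: "p = \<infinity> \<and> rr p = 0 \<and> inverse p = 0"
  then have h0: "rr p = 0" by blast
  have "Gr (rr p) s t = max s t" by (simp only: Gr_def h0 if_True refl)
  then show ?thesis using h by (simp add: Fp_def)
next
  assume "\<exists>q. q \<ge> 1 \<and> p = ennreal q \<and> rr p = 1/q \<and> inverse p = ennreal (1/q)"
  then obtain q where q: "q \<ge> 1" "p = ennreal q" "rr p = 1/q" by auto
  then show ?thesis by (simp add: Fp_def Gr_def Fq_def)
qed

lemma rr_tendsto: assumes lim: "pn \<longlonglongrightarrow> p" and pn: "\<forall>n. 1 \<le> pn n" and p: "1 \<le> p"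
  shows "(\<lambda>n. rr (pn n)) \<longlonglongrightarrow> rr p"
proof -
  have c: "continuous_on UNIV (\<lambda>x::ennreal. inverse x)"
    by (intro continuous_on_inverse_ennreal continuous_on_id)
  have "(\<lambda>n. inverse (pn n)) \<longlonglongrightarrow> inverse p"
    using continuous_on_tendsto_compose[OF c lim] by (simp add: o_def)
  then have "(\<lambda>n. inverse (pn n)) \<longlonglongrightarrow> ennreal (rr p)" using rr_inv[OF p] by simp
  then have "(\<lambda>n. enn2real (inverse (pn n))) \<longlonglongrightarrow> rr p"
    using rr_range[OF p] by (intro tendsto_enn2real) auto
  then show ?thesis unfolding rr_def .
qed

definition bset :: "('a \<Rightarrow> 'a \<Rightarrow> real) \<Rightarrow> 'a measure \<Rightarrow> ('b \<Rightarrow> 'b \<Rightarrow> real) \<Rightarrow> 'b measure \<Rightarrow> real set" where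
  "bset dX mX dY mY = {\<epsilon>. 0 \<le> \<epsilon> \<and>
     (\<exists>\<phi> \<psi> I0. parameter mX \<phi> \<and> parameter mY \<psi> \<and> I0 \<in> sets unitI \<and>
        measure unitI I0 \<ge> 1 - \<epsilon> \<and>
        (\<forall>s\<in>I0. \<forall>t\<in>I0. \<bar>dX (\<phi> s) (\<phi> t) - dY (\<psi> s) (\<psi> t)\<bar> \<le> \<epsilon>))}"

lemma box_bset: "box dX mX dY mY = Inf (bset dX mX dY mY)"
  unfolding box_def bset_def ..

lemma B_le:
  assumes "0 \<le> \<epsilon>" "parameter mX \<phi>" "parameter mY \<psi>" "I0 \<in> sets unitI" "measure unitI I0 \<ge> 1 - \<epsilon>"
    "\<And>s t. s \<in> I0 \<Longrightarrow> t \<in> I0 \<Longrightarrow> \<bar>dX (\<phi> s) (\<phi> t) - dY (\<psi> s) (\<psi> t)\<bar> \<le> \<epsilon>"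
  shows "box dX mX dY mY \<le> \<epsilon>"
  unfolding box_bset
proof (rule cInf_lower)
  show "\<epsilon> \<in> bset dX mX dY mY" unfolding bset_def using assms by blast
  show "bdd_below (bset dX mX dY mY)" unfolding bset_def by (rule bdd_belowI[of _ 0]) auto
qed

lemma bset_ne_iff: "bset dX mX dY mY \<noteq> {} \<longleftrightarrow> (\<exists>\<phi>. parameter mX \<phi>) \<and> (\<exists>\<psi>. parameter mY \<psi>)"
proof
  assume "bset dX mX dY mY \<noteq> {}" then show "(\<exists>\<phi>. parameter mX \<phi>) \<and> (\<exists>\<psi>. parameter mY \<psi>)"
    unfolding bset_def by auto
next
  assume "(\<exists>\<phi>. parameter mX \<phi>) \<and> (\<exists>\<psi>. parameter mY \<psi>)"
  then obtain \<phi> \<psi> where "parameter mX \<phi>" "parameter mY \<psi>" by auto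
  then have "1 \<in> bset dX mX dY mY" unfolding bset_def by (intro CollectI conjI exI[of _ \<phi>] exI[of _ \<psi>] exI[of _ "{}"]) auto
  then show "bset dX mX dY mY \<noteq> {}" by auto
qed

lemma box_empty: "\<not> ((\<exists>\<phi>. parameter mX \<phi>) \<and> (\<exists>\<psi>. parameter mY \<psi>)) \<Longrightarrow> box dX mX dY mY = Inf ({}::real set)"
proof -
  assume "\<not> ((\<exists>\<phi>. parameter mX \<phi>) \<and> (\<exists>\<psi>. parameter mY \<psi>))"
  then have "bset dX mX dY mY = {}" using bset_ne_iff[of dX mX dY mY] by blast
  then show ?thesis unfolding box_bset by simp
qed

lemma B_nonneg: "(\<exists>\<phi>. parameter mX \<phi>) \<Longrightarrow> (\<exists>\<psi>. parameter mY \<psi>) \<Longrightarrow> 0 \<le> box dX mX dY mY"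
  unfolding box_bset using bset_ne_iff[of dX mX dY mY]
  by (intro cInf_greatest) (auto simp: bset_def)

lemma B_lt:
  assumes "(\<exists>\<phi>. parameter mX \<phi>)" "(\<exists>\<psi>. parameter mY \<psi>)" "box dX mX dY mY < \<delta>"
  shows "\<exists>\<epsilon> \<phi> \<psi> I0. \<epsilon> < \<delta> \<and> 0 \<le> \<epsilon> \<and> parameter mX \<phi> \<and> parameter mY \<psi> \<and> I0 \<in> sets unitI \<and>
        measure unitI I0 \<ge> 1 - \<epsilon> \<and>
        (\<forall>s\<in>I0. \<forall>t\<in>I0. \<bar>dX (\<phi> s) (\<phi> t) - dY (\<psi> s) (\<psi> t)\<bar> \<le> \<epsilon>)"
proof -
  have "bset dX mX dY mY \<noteq> {}" using bset_ne_iff assms by blast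
  then obtain \<epsilon> where "\<epsilon> \<in> bset dX mX dY mY" "\<epsilon> < \<delta>" using cInf_lessD assms(3) unfolding box_bset by blast
  then show ?thesis unfolding bset_def by blast
qed

lemma distr_pair_snd':
  assumes "prob_space M1" "prob_space M2"
  shows "distr (M1 \<Otimes>\<^sub>M M2) M2 snd = M2"
proof (rule measure_eqI)
  interpret P1: prob_space M1 by fact
  interpret P2: prob_space M2 by fact
  show "sets (distr (M1 \<Otimes>\<^sub>M M2) M2 snd) = sets M2" by simp
  fix A assume "A \<in> sets (distr (M1 \<Otimes>\<^sub>M M2) M2 snd)"
  then have A: "A \<in> sets M2" by simp
  have "emeasure (distr (M1 \<Otimes>\<^sub>M M2) M2 snd) A = emeasure (M1 \<Otimes>\<^sub>M M2) (space M1 \<times> A)"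
    using A by (auto simp add: emeasure_distr space_pair_measure dest: sets.sets_into_space intro!: arg_cong2[where f=emeasure])
  also have "\<dots> = emeasure M1 (space M1) * emeasure M2 A"
    using A by (intro P2.emeasure_pair_measure_Times) auto
  finally show "emeasure (distr (M1 \<Otimes>\<^sub>M M2) M2 snd) A = emeasure M2 A" by (simp add: P1.emeasure_space_1)
qed

lemma param_fst:
  assumes "parameter (M1 \<Otimes>\<^sub>M M2) \<Phi>" "prob_space M1" "prob_space M2"
  shows "parameter M1 (fst \<circ> \<Phi>)"
proof -
  have m: "\<Phi> \<in> measurable unitI (M1 \<Otimes>\<^sub>M M2)" and d: "distr unitI (M1 \<Otimes>\<^sub>M M2) \<Phi> = M1 \<Otimes>\<^sub>M M2"
    using assms(1) unfolding parameter_def by auto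
  interpret P2: prob_space M2 by fact
  have "distr unitI M1 (fst \<circ> \<Phi>) = distr (distr unitI (M1 \<Otimes>\<^sub>M M2) \<Phi>) M1 fst"
    by (rule distr_distr[OF measurable_fst m, symmetric])
  also have "\<dots> = M1" unfolding d by (rule P2.distr_pair_fst)
  finally show ?thesis unfolding parameter_def using measurable_comp[OF m measurable_fst] by simp
qed

lemma param_snd:
  assumes "parameter (M1 \<Otimes>\<^sub>M M2) \<Phi>" "prob_space M1" "prob_space M2"
  shows "parameter M2 (snd \<circ> \<Phi>)"
proof -
  have m: "\<Phi> \<in> measurable unitI (M1 \<Otimes>\<^sub>M M2)" and d: "distr unitI (M1 \<Otimes>\<^sub>M M2) \<Phi> = M1 \<Otimes>\<^sub>M M2"
    using assms(1) unfolding parameter_def by auto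
  have "distr unitI M2 (snd \<circ> \<Phi>) = distr (distr unitI (M1 \<Otimes>\<^sub>M M2) \<Phi>) M2 snd"
    by (rule distr_distr[OF measurable_snd m, symmetric])
  also have "\<dots> = M2" unfolding d by (rule distr_pair_snd'[OF assms(2,3)])
  finally show ?thesis unfolding parameter_def using measurable_comp[OF m measurable_snd] by simp
qed

lemma ball_sets:
  assumes mm: "mm_space d m" and x0: "x0 \<in> space m"
  shows "{x\<in>space m. d x x0 \<le> R} \<in> sets m"
proof -
  interpret M: Metric_space "space m" d using mm unfolding mm_space_def by auto
  let ?U = "{x\<in>space m. R < d x x0}"
  have "openin M.mtopology ?U"
    unfolding M.openin_mtopology
  proof (intro conjI allI impI)
    show "?U \<subseteq> space m" by auto
    fix x assume x: "x \<in> ?U"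
    show "\<exists>r>0. M.mball x r \<subseteq> ?U"
    proof (intro exI[of _ "d x x0 - R"] conjI)
      show "0 < d x x0 - R" using x by auto
      show "M.mball x (d x x0 - R) \<subseteq> ?U"
      proof
        fix y assume y: "y \<in> M.mball x (d x x0 - R)"
        then have "y \<in> space m" "d x y < d x x0 - R" by auto
        moreover have "d x x0 \<le> d x y + d y x0" using M.triangle x \<open>y \<in> space m\<close> x0 by auto
        ultimately show "y \<in> ?U" by auto
      qed
    qed
  qed
  then have "?U \<in> sets m" using mm unfolding mm_space_def by (auto intro: sigma_sets.Basic)
  then have "space m - ?U \<in> sets m" by auto
  moreover have "space m - ?U = {x\<in>space m. d x x0 \<le> R}" by auto
  ultimately show ?thesis by simp
qed

lemma tight:
  assumes mm: "mm_space d m" and x0: "x0 \<in> space m" and tau: "0 < \<tau>"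
  shows "\<exists>R\<ge>0. measure m {x\<in>space m. d x x0 \<le> R} \<ge> 1 - \<tau>"
proof -
  interpret P: prob_space m using mm unfolding mm_space_def by auto
  define C where "C n = {x\<in>space m. d x x0 \<le> real n}" for n :: nat
  have Cs: "range C \<subseteq> sets m" unfolding C_def using ball_sets[OF mm x0] by auto
  have inc: "incseq C" unfolding C_def incseq_def by auto
  have U: "(\<Union>n. C n) = space m"
  proof
    show "(\<Union>n. C n) \<subseteq> space m" unfolding C_def by auto
    show "space m \<subseteq> (\<Union>n. C n)"
    proof
      fix x assume x: "x \<in> space m"
      obtain n :: nat where "d x x0 \<le> real n" using real_arch_simple by blast
      then show "x \<in> (\<Union>n. C n)" using x unfolding C_def by auto
    qed
  qed
  have "(\<lambda>n. measure m (C n)) \<longlonglongrightarrow> measure m (\<Union>n. C n)"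
    by (rule P.finite_Lim_measure_incseq[OF Cs inc])
  then have "(\<lambda>n. measure m (C n)) \<longlonglongrightarrow> 1" using U P.prob_space by simp
  then have "eventually (\<lambda>n. 1 - \<tau> < measure m (C n)) sequentially"
    using tau by (intro order_tendstoD) auto
  then obtain n where "1 - \<tau> < measure m (C n)" by (metis eventually_sequentially order_refl)
  then show ?thesis unfolding C_def by (intro exI[of _ "real n"]) auto
qed

lemma param_measure:
  assumes "parameter m \<phi>" "C \<in> sets m"
  shows "measure unitI {s\<in>UI. \<phi> s \<in> C} = measure m C"
proof -
  have mm: "\<phi> \<in> measurable unitI m" and d: "distr unitI m \<phi> = m" using assms(1) unfolding parameter_def by auto
  have "measure m C = measure (distr unitI m \<phi>) C" using d by simp
  also have "\<dots> = measure unitI (\<phi> -` C \<inter> space unitI)" by (rule measure_distr[OF mm]) (simp add: assms)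
  also have "\<phi> -` C \<inter> space unitI = {s\<in>UI. \<phi> s \<in> C}" by auto
  finally show ?thesis by simp
qed

lemma param_sets:
  assumes "parameter m \<phi>" "C \<in> sets m"
  shows "{s\<in>UI. \<phi> s \<in> C} \<in> sets unitI"
proof -
  have mm: "\<phi> \<in> measurable unitI m" using assms(1) unfolding parameter_def by auto
  have "\<phi> -` C \<inter> space unitI \<in> sets unitI" using measurable_sets[OF mm assms(2)] .
  moreover have "\<phi> -` C \<inter> space unitI = {s\<in>UI. \<phi> s \<in> C}" by auto
  ultimately show ?thesis by simp
qed

lemma param_space: "parameter m \<phi> \<Longrightarrow> s \<in> UI \<Longrightarrow> \<phi> s \<in> space m"
  unfolding parameter_def using measurable_space[of \<phi> unitI m s] by auto

lemma unitI_measure_Int: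
  assumes "A \<in> sets unitI" "B \<in> sets unitI"
  shows "measure unitI (A \<inter> B) \<ge> measure unitI A + measure unitI B - 1"
proof -
  interpret P: prob_space unitI by (rule prob_unitI)
  have "measure unitI (A \<union> B) \<le> 1" by simp
  moreover have "measure unitI (A \<union> B) = measure unitI A + measure unitI B - measure unitI (A \<inter> B)"
    using assms by (intro measure_Un3) (auto simp: fmeasurable_def less_top[symmetric])
  ultimately show ?thesis by linarith
qed

lemma MP0: assumes "metric_preserving F" shows "F 0 = 0"
proof -
  have "Metric_space {0::nat} (\<lambda>x y. 0)" by unfold_locales auto
  then have "Metric_space {0::nat} (\<lambda>x y. F 0)" using assms unfolding metric_preserving_def by blast
  then show ?thesis using Metric_space.zero[of "{0::nat}" "\<lambda>x y. F 0" 0 0] by simp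
qed

lemma MP3:
  assumes mp: "metric_preserving F" and pos: "0 < a" "0 < b" "0 < c"
    and t: "a \<le> b + c" "b \<le> a + c" "c \<le> a + b"
  shows "F a \<le> F b + F c"
proof -
  define d :: "nat \<Rightarrow> nat \<Rightarrow> real" where
    "d x y = (if x = y then 0 else if x + y = 1 then b else if x + y = 3 then c else if x + y = 2 then a else 1)" for x y
  have "Metric_space {0,1,2} d"
  proof
    show "0 \<le> d x y" for x y unfolding d_def using pos by auto
    show "d x y = d y x" for x y unfolding d_def by (simp add: add.commute eq_commute)
    show "x \<in> {0,1,2} \<Longrightarrow> y \<in> {0,1,2} \<Longrightarrow> d x y = 0 \<longleftrightarrow> x = y" for x y unfolding d_def using pos by auto
    show "x \<in> {0,1,2} \<Longrightarrow> y \<in> {0,1,2} \<Longrightarrow> z \<in> {0,1,2} \<Longrightarrow> d x z \<le> d x y + d y z" for x y z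
      unfolding d_def using pos t by auto
  qed
  then have "Metric_space {0,1,2} (\<lambda>x y. F (d x y))" using mp unfolding metric_preserving_def by blast
  then have "F (d 0 2) \<le> F (d 0 1) + F (d 1 2)" by (rule Metric_space.triangle) auto
  then show ?thesis unfolding d_def by simp
qed

lemma MPa:
  assumes mp: "metric_preserving F" and nn: "\<And>x. 0 \<le> x \<Longrightarrow> 0 \<le> F x" and xy: "0 \<le> x" "0 \<le> y"
  shows "\<bar>F x - F y\<bar> \<le> F \<bar>x - y\<bar>"
proof -
  have k: "\<bar>F x - F y\<bar> \<le> F \<bar>x - y\<bar>" if "0 \<le> y" "y \<le> x" for x y
  proof (cases "y = x")
    case True then show ?thesis using MP0[OF mp] by simp
  next
    case False
    show ?thesis
    proof (cases "y = 0")
      case True then show ?thesis using MP0[OF mp] nn that by simp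
    next
      case False
      have "F x \<le> F y + F (x - y)" using MP3[OF mp, of x y "x - y"] that False \<open>y \<noteq> x\<close> by auto
      moreover have "F y \<le> F x + F (x - y)" using MP3[OF mp, of y x "x - y"] that False \<open>y \<noteq> x\<close> by auto
      ultimately show ?thesis using that by auto
    qed
  qed
  show ?thesis
  proof (cases "y \<le> x")
    case True then show ?thesis using k xy by simp
  next
    case False then show ?thesis using k[of x y] xy by (simp add: abs_minus_commute)
  qed
qed

lemma MPb:
  assumes mp: "metric_preserving F" and nn: "\<And>x. 0 \<le> x \<Longrightarrow> 0 \<le> F x" and x: "0 \<le> x" "x \<le> 2 * \<eta>" and e: "0 < \<eta>"
  shows "F x \<le> 2 * F \<eta>"
proof (cases "x = 0")
  case True then show ?thesis using MP0[OF mp] nn[of \<eta>] e by simp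
next
  case False then show ?thesis using MP3[OF mp, of x \<eta> \<eta>] x e by auto
qed

lemma unif_conv:
  fixes Fn :: "nat \<Rightarrow> real \<Rightarrow> real" and F :: "real \<Rightarrow> real"
  assumes mpn: "\<And>n. metric_preserving (Fn n)" and nnn: "\<And>n x. 0 \<le> x \<Longrightarrow> 0 \<le> Fn n x"
    and mp: "metric_preserving F" and nn: "\<And>x. 0 \<le> x \<Longrightarrow> 0 \<le> F x"
    and cF: "continuous_on {0..} F" and conv: "\<And>t. 0 \<le> t \<Longrightarrow> (\<lambda>n. Fn n t) \<longlonglongrightarrow> F t"
    and rho: "0 < \<rho>"
  shows "eventually (\<lambda>n. \<forall>b\<in>{0..L}. \<bar>Fn n b - F b\<bar> \<le> \<rho>) sequentially"
proof -
  have F0: "F 0 = 0" by (rule MP0[OF mp])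
  have "(F \<longlongrightarrow> F 0) (at 0 within {0..})"
    using cF by (simp add: continuous_on_def)
  then have "eventually (\<lambda>x. F x < \<rho> / 8) (at 0 within {0..})"
    using rho F0 by (intro order_tendstoD) auto
  then obtain \<eta>0 where e0: "\<eta>0 > 0" "\<And>x. x \<in> {0..} \<Longrightarrow> x \<noteq> 0 \<Longrightarrow> dist x 0 < \<eta>0 \<Longrightarrow> F x < \<rho> / 8"
    unfolding eventually_at by auto
  define \<eta> where "\<eta> = \<eta>0 / 2"
  have e: "\<eta> > 0" "F \<eta> < \<rho> / 8" using e0 unfolding \<eta>_def by auto
  define N where "N = nat \<lceil>L / \<eta>\<rceil>"
  have ev1: "eventually (\<lambda>n. Fn n \<eta> < \<rho> / 8) sequentially"
    using conv[of \<eta>] e by (intro order_tendstoD) auto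
  have ev2: "eventually (\<lambda>n. \<forall>k\<in>{..N}. \<bar>Fn n (real k * \<eta>) - F (real k * \<eta>)\<bar> < \<rho> / 4) sequentially"
  proof (rule eventually_ball_finite)
    show "finite {..N}" by simp
    show "\<forall>k\<in>{..N}. eventually (\<lambda>n. \<bar>Fn n (real k * \<eta>) - F (real k * \<eta>)\<bar> < \<rho> / 4) sequentially"
    proof
      fix k assume "k \<in> {..N}"
      have "(\<lambda>n. Fn n (real k * \<eta>) - F (real k * \<eta>)) \<longlonglongrightarrow> 0"
        using conv[of "real k * \<eta>"] e by (simp add: LIM_zero)
      then show "eventually (\<lambda>n. \<bar>Fn n (real k * \<eta>) - F (real k * \<eta>)\<bar> < \<rho> / 4) sequentially"
      proof -
        have "\<forall>e>0. eventually (\<lambda>n. \<bar>Fn n (real k * \<eta>) - F (real k * \<eta>)\<bar> < e) sequentially"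
          using \<open>(\<lambda>n. Fn n (real k * \<eta>) - F (real k * \<eta>)) \<longlonglongrightarrow> 0\<close> by (simp add: tendsto_iff dist_real_def)
        then show ?thesis using rho by (meson zero_less_divide_iff zero_less_numeral)
      qed
    qed
  qed
  show ?thesis
    using ev1 ev2
  proof eventually_elim
    case (elim n)
    show ?case
    proof
      fix b assume b: "b \<in> {0..L}"
      define k where "k = nat \<lfloor>b / \<eta>\<rfloor>"
      have bq: "0 \<le> b / \<eta>" using b e by auto
      have kle: "real k * \<eta> \<le> b" "b < real k * \<eta> + \<eta>"
      proof -
        have "real k = of_int \<lfloor>b / \<eta>\<rfloor>" unfolding k_def using bq by simp
        moreover have f1: "of_int \<lfloor>b / \<eta>\<rfloor> \<le> b / \<eta>" "b / \<eta> < of_int \<lfloor>b / \<eta>\<rfloor> + 1" by linarith+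
        moreover have "of_int \<lfloor>b / \<eta>\<rfloor> * \<eta> \<le> b / \<eta> * \<eta>" using f1(1) e(1) by (intro mult_right_mono) simp_all
        moreover have "b / \<eta> * \<eta> < (of_int \<lfloor>b / \<eta>\<rfloor> + 1) * \<eta>" using f1(2) e(1) by (intro mult_strict_right_mono) simp_all
        ultimately show "real k * \<eta> \<le> b" "b < real k * \<eta> + \<eta>" using e by (auto simp: algebra_simps)
      qed
      have kN: "k \<in> {..N}"
      proof -
        have "b / \<eta> \<le> L / \<eta>" using b e by (simp add: divide_right_mono)
        then have "\<lfloor>b / \<eta>\<rfloor> \<le> \<lceil>L / \<eta>\<rceil>" by (meson floor_le_ceiling floor_mono order_trans)
        then show ?thesis unfolding k_def N_def by simp
      qed
      let ?g = "real k * \<eta>"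
      have g0: "0 \<le> ?g" using e by simp
      have dg: "\<bar>b - ?g\<bar> \<le> 2 * \<eta>" "0 \<le> \<bar>b - ?g\<bar>" using kle e by auto
      have "\<bar>Fn n b - Fn n ?g\<bar> \<le> Fn n \<bar>b - ?g\<bar>" using MPa[OF mpn nnn] b g0 by auto
      also have "\<dots> \<le> 2 * Fn n \<eta>" using MPb[OF mpn nnn dg(2) dg(1) e(1)] .
      finally have a1: "\<bar>Fn n b - Fn n ?g\<bar> \<le> 2 * Fn n \<eta>" .
      have "\<bar>F b - F ?g\<bar> \<le> F \<bar>b - ?g\<bar>" using MPa[OF mp nn] b g0 by auto
      also have "\<dots> \<le> 2 * F \<eta>" using MPb[OF mp nn dg(2) dg(1) e(1)] .
      finally have a2: "\<bar>F b - F ?g\<bar> \<le> 2 * F \<eta>" .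
      have a3: "\<bar>Fn n ?g - F ?g\<bar> < \<rho> / 4" using elim(2) kN by blast
      show "\<bar>Fn n b - F b\<bar> \<le> \<rho>" using a1 a2 a3 elim(1) e(2) by linarith
    qed
  qed
qed

lemma small_eta:
  fixes F :: "real \<Rightarrow> real"
  assumes cF: "continuous_on {0..} F" and F0: "F 0 = (0::real)" and c: "0 < c"
  shows "\<exists>\<eta>>0. F \<eta> < c"
proof -
  have "(F \<longlongrightarrow> F 0) (at 0 within {0..})" using cF by (simp add: continuous_on_def)
  then have "eventually (\<lambda>x. F x < c) (at 0 within {0..})" using c F0 by (intro order_tendstoD) auto
  then obtain e where e: "e > 0" "\<And>x. x \<in> {0..} \<Longrightarrow> x \<noteq> 0 \<Longrightarrow> dist x 0 < e \<Longrightarrow> F x < c"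
    unfolding eventually_at by auto
  then show ?thesis by (intro exI[of _ "e/2"]) auto
qed

lemma mm_nonempty: "mm_space d m \<Longrightarrow> \<exists>x0. x0 \<in> space m"
  unfolding mm_space_def using prob_space.not_empty by blast

lemma partB:
  fixes dXn :: "nat \<Rightarrow> 'e \<Rightarrow> 'e \<Rightarrow> real" and dX :: "'f \<Rightarrow> 'f \<Rightarrow> real"
    and Fn :: "nat \<Rightarrow> real \<Rightarrow> real" and F :: "real \<Rightarrow> real"
  assumes mmn: "\<forall>n. mm_space (dXn n) (mXn n)" and mm: "mm_space dX mX"
    and bc: "box_converges dXn mXn dX mX"
    and hFn: "\<forall>n. continuous_on {0..} (Fn n) \<and> Fn n ` {0..} \<subseteq> {0..} \<and> metric_preserving (Fn n)"
    and cF: "continuous_on {0..} F" and imF: "F ` {0..} \<subseteq> {0..}" and mpF: "metric_preserving F"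
    and conv: "\<forall>t\<ge>0. (\<lambda>n. Fn n t) \<longlonglongrightarrow> F t"
  shows "box_converges (\<lambda>n x y. Fn n (dXn n x y)) mXn (\<lambda>x y. F (dX x y)) mX"
proof -
  let ?bX = "\<lambda>n. box (dXn n) (mXn n) dX mX"
  let ?bF = "\<lambda>n. box (\<lambda>x y. Fn n (dXn n x y)) (mXn n) (\<lambda>x y. F (dX x y)) mX"
  have limX: "?bX \<longlonglongrightarrow> 0" using bc unfolding box_converges_def .
  have nnF: "\<And>x. 0 \<le> x \<Longrightarrow> 0 \<le> F x" using imF by auto
  have nnFn: "\<And>n x. 0 \<le> x \<Longrightarrow> 0 \<le> Fn n x" using hFn by auto
  have mpFn: "\<And>n. metric_preserving (Fn n)" using hFn by auto
  obtain x0 where x0: "x0 \<in> space mX" using mm_nonempty[OF mm] by auto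
  interpret MX: Metric_space "space mX" dX using mm unfolding mm_space_def by auto
  have "\<forall>\<rho>>0. eventually (\<lambda>n. dist (?bF n) 0 < \<rho>) sequentially"
  proof (intro allI impI)
    fix \<rho> :: real assume rho: "0 < \<rho>"
    obtain R where R: "R \<ge> 0" "measure mX {x\<in>space mX. dX x x0 \<le> R} \<ge> 1 - \<rho>/4"
      using tight[OF mm x0, of "\<rho>/4"] rho by auto
    obtain \<eta> where eta: "\<eta> > 0" "F \<eta> < \<rho>/8" using small_eta[OF cF MP0[OF mpF], of "\<rho>/8"] rho by auto
    have ev1: "eventually (\<lambda>n. \<forall>b\<in>{0..2*R+1}. \<bar>Fn n b - F b\<bar> \<le> \<rho>/4) sequentially"
      using rho conv by (intro unif_conv[OF mpFn nnFn mpF nnF cF]) auto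
    have ev2: "eventually (\<lambda>n. ?bX n < min (\<rho>/4) (min (2*\<eta>) 1)) sequentially"
      using limX rho eta by (intro order_tendstoD) auto
    have ev3: "eventually (\<lambda>n. dist (?bX n) 0 < \<rho>) sequentially"
      using limX rho by (simp add: tendsto_iff)
    show "eventually (\<lambda>n. dist (?bF n) 0 < \<rho>) sequentially"
      using ev1 ev2 ev3
    proof eventually_elim
      case (elim n)
      show ?case
      proof (cases "(\<exists>\<phi>. parameter (mXn n) \<phi>) \<and> (\<exists>\<psi>. parameter mX \<psi>)")
        case False
        then have "?bF n = ?bX n" using box_empty[of "mXn n" mX] by metis
        then show ?thesis using elim(3) by simp
      next
        case True
        then obtain \<epsilon> \<phi>n \<phi> I0 where E: "\<epsilon> < min (\<rho>/4) (min (2*\<eta>) 1)" "0 \<le> \<epsilon>"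
          "parameter (mXn n) \<phi>n" "parameter mX \<phi>" "I0 \<in> sets unitI" "measure unitI I0 \<ge> 1 - \<epsilon>"
          "\<forall>s\<in>I0. \<forall>t\<in>I0. \<bar>dXn n (\<phi>n s) (\<phi>n t) - dX (\<phi> s) (\<phi> t)\<bar> \<le> \<epsilon>"
          using B_lt[of "mXn n" mX "dXn n" dX] elim(2) by blast
        interpret MXn: Metric_space "space (mXn n)" "dXn n" using mmn unfolding mm_space_def by auto
        let ?B = "{s\<in>UI. \<phi> s \<in> {x\<in>space mX. dX x x0 \<le> R}}"
        have Bs: "?B \<in> sets unitI" by (rule param_sets[OF E(4) ball_sets[OF mm x0]])
        have Bm: "measure unitI ?B \<ge> 1 - \<rho>/4" using param_measure[OF E(4) ball_sets[OF mm x0]] R by simp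
        let ?K = "I0 \<inter> ?B"
        have Ks: "?K \<in> sets unitI" using E(5) Bs by auto
        have Km: "measure unitI ?K \<ge> 1 - \<rho>/2"
          using unitI_measure_Int[OF E(5) Bs] E(1,6) Bm by linarith
        have bound: "\<bar>Fn n (dXn n (\<phi>n s) (\<phi>n t)) - F (dX (\<phi> s) (\<phi> t))\<bar> \<le> \<rho>/2"
          if st: "s \<in> ?K" "t \<in> ?K" for s t
        proof -
          let ?a = "dXn n (\<phi>n s) (\<phi>n t)" and ?b = "dX (\<phi> s) (\<phi> t)"
          have sp: "\<phi> s \<in> space mX" "\<phi> t \<in> space mX" using param_space[OF E(4)] st by auto
          have ab: "\<bar>?a - ?b\<bar> \<le> \<epsilon>" using E(7) st by auto
          have b2R: "?b \<le> 2*R"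
          proof -
            have "?b \<le> dX (\<phi> s) x0 + dX x0 (\<phi> t)" using MX.triangle sp x0 by blast
            moreover have "dX (\<phi> s) x0 \<le> R" "dX (\<phi> t) x0 \<le> R" using st by auto
            moreover have "dX x0 (\<phi> t) = dX (\<phi> t) x0" by (rule MX.commute)
            ultimately show ?thesis by linarith
          qed
          have a0: "0 \<le> ?a" by simp
          have b0: "0 \<le> ?b" by simp
          have aL: "?a \<in> {0..2*R+1}" using ab b2R E(1) a0 by auto
          have "\<bar>Fn n ?a - F ?a\<bar> \<le> \<rho>/4" using elim(1) aL by blast
          moreover have "\<bar>F ?a - F ?b\<bar> \<le> F \<bar>?a - ?b\<bar>" by (rule MPa[OF mpF nnF a0 b0])
          moreover have "F \<bar>?a - ?b\<bar> \<le> 2 * F \<eta>" using ab E(1) by (intro MPb[OF mpF nnF _ _ eta(1)]) auto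
          ultimately show ?thesis using eta(2) by linarith
        qed
        have "?bF n \<le> \<rho>/2"
          using rho Ks Km bound param_sets E(3,4)
          by (intro B_le[of "\<rho>/2" "mXn n" \<phi>n mX \<phi> ?K]) auto
        moreover have "0 \<le> ?bF n" using True by (intro B_nonneg) auto
        ultimately show ?thesis using rho by simp
      qed
    qed
  qed
  then show ?thesis unfolding box_converges_def by (simp add: tendsto_iff)
qed

lemma hh_prod_measure:
  assumes A: "A \<in> sets unitI" and B: "B \<in> sets unitI"
  shows "measure unitI {s\<in>UI. hh s \<in> A \<times> B} = measure unitI A * measure unitI B"
proof -
  interpret U: prob_space unitI by (rule prob_unitI)
  have AB: "A \<times> B \<in> sets (unitI \<Otimes>\<^sub>M unitI)" using A B by auto
  have eq: "{s\<in>UI. hh s \<in> A \<times> B} = hh -` (A \<times> B) \<inter> space unitI" by auto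
  have "measure unitI {s\<in>UI. hh s \<in> A \<times> B} = measure unitI (hh -` (A \<times> B) \<inter> space unitI)"
    by (simp only: eq)
  also have "\<dots> = measure (distr unitI (unitI \<Otimes>\<^sub>M unitI) hh) (A \<times> B)"
    by (rule measure_distr[OF hh_meas AB, symmetric])
  also have "\<dots> = measure (unitI \<Otimes>\<^sub>M unitI) (A \<times> B)" by (simp add: hh_distr)
  also have "\<dots> = enn2real (emeasure unitI A * emeasure unitI B)"
    unfolding measure_def using U.emeasure_pair_measure_Times[OF A B] by simp
  also have "\<dots> = measure unitI A * measure unitI B" by (simp add: measure_def enn2real_mult)
  finally show ?thesis .
qed

lemma prod_ge: "0 \<le> a \<Longrightarrow> a \<le> 1 \<Longrightarrow> 0 \<le> b \<Longrightarrow> b \<le> 1 \<Longrightarrow> a * b \<ge> a + b - (1::real)"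
proof -
  assume "0 \<le> a" "a \<le> 1" "0 \<le> b" "b \<le> 1"
  then have "0 \<le> (1 - a) * (1 - b)" by simp
  then show ?thesis by (simp add: algebra_simps)
qed

lemma hh_in: "s \<in> UI \<Longrightarrow> hh s \<in> A \<times> B \<longleftrightarrow> h1 s \<in> A \<and> h2 s \<in> B"
  unfolding hh_def by simp

lemma h_UI: "s \<in> UI \<Longrightarrow> h1 s \<in> UI \<and> h2 s \<in> UI"
  using h1_UI h2_UI by auto

lemma partA:
  fixes dXn :: "nat \<Rightarrow> 'a \<Rightarrow> 'a \<Rightarrow> real" and dX :: "'b \<Rightarrow> 'b \<Rightarrow> real"
    and dYn :: "nat \<Rightarrow> 'c \<Rightarrow> 'c \<Rightarrow> real" and dY :: "'d \<Rightarrow> 'd \<Rightarrow> real"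
    and pn :: "nat \<Rightarrow> ennreal" and p :: ennreal
  assumes mmXn: "\<forall>n. mm_space (dXn n) (mXn n)" and mmX: "mm_space dX mX"
    and mmYn: "\<forall>n. mm_space (dYn n) (mYn n)" and mmY: "mm_space dY mY"
    and bcX: "box_converges dXn mXn dX mX" and bcY: "box_converges dYn mYn dY mY"
    and pn1: "\<forall>n. 1 \<le> pn n" and p1: "1 \<le> p" and plim: "pn \<longlonglongrightarrow> p"
  shows "box_converges (\<lambda>n. prod_dist (pn n) (dXn n) (dYn n)) (\<lambda>n. mXn n \<Otimes>\<^sub>M mYn n)
                             (prod_dist p dX dY) (mX \<Otimes>\<^sub>M mY)"
proof -
  let ?bX = "\<lambda>n. box (dXn n) (mXn n) dX mX"
  let ?bY = "\<lambda>n. box (dYn n) (mYn n) dY mY"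
  let ?bP = "\<lambda>n. box (prod_dist (pn n) (dXn n) (dYn n)) (mXn n \<Otimes>\<^sub>M mYn n) (prod_dist p dX dY) (mX \<Otimes>\<^sub>M mY)"
  have limX: "?bX \<longlonglongrightarrow> 0" using bcX unfolding box_converges_def .
  have limY: "?bY \<longlonglongrightarrow> 0" using bcY unfolding box_converges_def .
  have prX: "prob_space mX" "\<And>n. prob_space (mXn n)" using mmX mmXn unfolding mm_space_def by auto
  have prY: "prob_space mY" "\<And>n. prob_space (mYn n)" using mmY mmYn unfolding mm_space_def by auto
  have sfY: "sigma_finite_measure mY" "\<And>n. sigma_finite_measure (mYn n)"
    using prY by (auto intro: prob_space_imp_sigma_finite)
  obtain x0 where x0: "x0 \<in> space mX" using mm_nonempty[OF mmX] by auto
  obtain y0 where y0: "y0 \<in> space mY" using mm_nonempty[OF mmY] by auto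
  interpret MX: Metric_space "space mX" dX using mmX unfolding mm_space_def by auto
  interpret MY: Metric_space "space mY" dY using mmY unfolding mm_space_def by auto
  define r where "r = rr p"
  define rn where "rn n = rr (pn n)" for n
  have r01: "0 \<le> r" "r \<le> 1" using rr_range[OF p1] unfolding r_def by auto
  have rn01: "0 \<le> rn n" "rn n \<le> 1" for n using rr_range pn1 unfolding rn_def by auto
  have rlim: "rn \<longlonglongrightarrow> r" unfolding rn_def r_def using rr_tendsto[OF plim pn1 p1] .
  have "\<forall>\<rho>>0. eventually (\<lambda>n. dist (?bP n) 0 < \<rho>) sequentially"
  proof (intro allI impI)
    fix \<rho> :: real assume rho: "0 < \<rho>"
    obtain R1 where R1: "R1 \<ge> 0" "measure mX {x\<in>space mX. dX x x0 \<le> R1} \<ge> 1 - \<rho>/8"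
      using tight[OF mmX x0, of "\<rho>/8"] rho by auto
    obtain R2 where R2: "R2 \<ge> 0" "measure mY {y\<in>space mY. dY y y0 \<le> R2} \<ge> 1 - \<rho>/8"
      using tight[OF mmY y0, of "\<rho>/8"] rho by auto
    have "(\<lambda>n. (2 powr \<bar>rn n - r\<bar> - 1) * (4 * (R1 + R2))) \<longlonglongrightarrow> (2 powr \<bar>r - r\<bar> - 1) * (4 * (R1 + R2))"
      using rlim by (intro tendsto_intros) auto
    then have "(\<lambda>n. (2 powr \<bar>rn n - r\<bar> - 1) * (4 * (R1 + R2))) \<longlonglongrightarrow> 0" by simp
    then have ev5: "eventually (\<lambda>n. (2 powr \<bar>rn n - r\<bar> - 1) * (4 * (R1 + R2)) < \<rho>/4) sequentially"
      using rho by (intro order_tendstoD) auto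
    have ev1: "eventually (\<lambda>n. ?bX n < \<rho>/8) sequentially" using limX rho by (intro order_tendstoD) auto
    have ev2: "eventually (\<lambda>n. ?bY n < \<rho>/8) sequentially" using limY rho by (intro order_tendstoD) auto
    have ev3: "eventually (\<lambda>n. dist (?bX n) 0 < \<rho>) sequentially" using limX rho by (simp add: tendsto_iff)
    have ev4: "eventually (\<lambda>n. dist (?bY n) 0 < \<rho>) sequentially" using limY rho by (simp add: tendsto_iff)
    show "eventually (\<lambda>n. dist (?bP n) 0 < \<rho>) sequentially"
      using ev1 ev2 ev3 ev4 ev5
    proof eventually_elim
      case (elim n)
      show ?case
      proof (cases "(\<exists>\<phi>. parameter (mXn n) \<phi>) \<and> (\<exists>\<psi>. parameter mX \<psi>) \<and> (\<exists>\<phi>. parameter (mYn n) \<phi>) \<and> (\<exists>\<psi>. parameter mY \<psi>)")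
        case False
        have nP: "\<not> ((\<exists>\<phi>. parameter (mXn n \<Otimes>\<^sub>M mYn n) \<phi>) \<and> (\<exists>\<psi>. parameter (mX \<Otimes>\<^sub>M mY) \<psi>))"
        proof
          assume "(\<exists>\<phi>. parameter (mXn n \<Otimes>\<^sub>M mYn n) \<phi>) \<and> (\<exists>\<psi>. parameter (mX \<Otimes>\<^sub>M mY) \<psi>)"
          then obtain \<Phi> \<Psi> where "parameter (mXn n \<Otimes>\<^sub>M mYn n) \<Phi>" "parameter (mX \<Otimes>\<^sub>M mY) \<Psi>" by auto
          then have "parameter (mXn n) (fst \<circ> \<Phi>)" "parameter (mYn n) (snd \<circ> \<Phi>)"
            "parameter mX (fst \<circ> \<Psi>)" "parameter mY (snd \<circ> \<Psi>)"
            using param_fst param_snd prX prY by blast+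
          then show False using False by blast
        qed
        have eP: "?bP n = Inf ({}::real set)" by (rule box_empty[OF nP])
        show ?thesis
        proof (cases "(\<exists>\<phi>. parameter (mXn n) \<phi>) \<and> (\<exists>\<psi>. parameter mX \<psi>)")
          case False
          then have "?bX n = Inf ({}::real set)" by (rule box_empty)
          then show ?thesis using eP elim(3) by simp
        next
          case True
          then have "\<not> ((\<exists>\<phi>. parameter (mYn n) \<phi>) \<and> (\<exists>\<psi>. parameter mY \<psi>))" using False by blast
          then have "?bY n = Inf ({}::real set)" by (rule box_empty)
          then show ?thesis using eP elim(4) by simp
        qed
      next
        case True
        then obtain \<epsilon>X \<phi>n \<phi> I0 where EX: "\<epsilon>X < \<rho>/8" "0 \<le> \<epsilon>X"
          "parameter (mXn n) \<phi>n" "parameter mX \<phi>" "I0 \<in> sets unitI" "measure unitI I0 \<ge> 1 - \<epsilon>X"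
          "\<forall>s\<in>I0. \<forall>t\<in>I0. \<bar>dXn n (\<phi>n s) (\<phi>n t) - dX (\<phi> s) (\<phi> t)\<bar> \<le> \<epsilon>X"
          using B_lt[of "mXn n" mX "dXn n" dX] elim(1) by blast
        from True obtain \<epsilon>Y \<psi>n \<psi> J0 where EY: "\<epsilon>Y < \<rho>/8" "0 \<le> \<epsilon>Y"
          "parameter (mYn n) \<psi>n" "parameter mY \<psi>" "J0 \<in> sets unitI" "measure unitI J0 \<ge> 1 - \<epsilon>Y"
          "\<forall>s\<in>J0. \<forall>t\<in>J0. \<bar>dYn n (\<psi>n s) (\<psi>n t) - dY (\<psi> s) (\<psi> t)\<bar> \<le> \<epsilon>Y"
          using B_lt[of "mYn n" mY "dYn n" dY] elim(2) by blast
        interpret MXn: Metric_space "space (mXn n)" "dXn n" using mmXn unfolding mm_space_def by auto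
        interpret MYn: Metric_space "space (mYn n)" "dYn n" using mmYn unfolding mm_space_def by auto
        let ?BX = "{s\<in>UI. \<phi> s \<in> {x\<in>space mX. dX x x0 \<le> R1}}"
        let ?BY = "{s\<in>UI. \<psi> s \<in> {y\<in>space mY. dY y y0 \<le> R2}}"
        have BXs: "?BX \<in> sets unitI" by (rule param_sets[OF EX(4) ball_sets[OF mmX x0]])
        have BXm: "measure unitI ?BX \<ge> 1 - \<rho>/8" using param_measure[OF EX(4) ball_sets[OF mmX x0]] R1 by simp
        have BYs: "?BY \<in> sets unitI" by (rule param_sets[OF EY(4) ball_sets[OF mmY y0]])
        have BYm: "measure unitI ?BY \<ge> 1 - \<rho>/8" using param_measure[OF EY(4) ball_sets[OF mmY y0]] R2 by simp
        let ?A = "I0 \<inter> ?BX" and ?B = "J0 \<inter> ?BY"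
        have As: "?A \<in> sets unitI" using EX(5) BXs by auto
        have Bs: "?B \<in> sets unitI" using EY(5) BYs by auto
        have Am: "measure unitI ?A \<ge> 1 - \<rho>/4" using unitI_measure_Int[OF EX(5) BXs] EX(1,6) BXm by linarith
        have Bm: "measure unitI ?B \<ge> 1 - \<rho>/4" using unitI_measure_Int[OF EY(5) BYs] EY(1,6) BYm by linarith
        interpret U: prob_space unitI by (rule prob_unitI)
        let ?K = "{s\<in>UI. hh s \<in> ?A \<times> ?B}"
        have Ks: "?K \<in> sets unitI"
        proof -
          have "?K = hh -` (?A \<times> ?B) \<inter> space unitI" by auto
          moreover have "?A \<times> ?B \<in> sets (unitI \<Otimes>\<^sub>M unitI)" using As Bs by auto
          ultimately show ?thesis using measurable_sets[OF hh_meas, of "?A \<times> ?B"] by (simp only:)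
        qed
        have Km: "measure unitI ?K \<ge> 1 - \<rho>/2"
        proof -
          have "measure unitI ?K = measure unitI ?A * measure unitI ?B" by (rule hh_prod_measure[OF As Bs])
          moreover have "measure unitI ?A * measure unitI ?B \<ge> measure unitI ?A + measure unitI ?B - 1"
            by (rule prod_ge) (auto simp: U.prob_le_1)
          ultimately show ?thesis using Am Bm by linarith
        qed
        define \<Phi>n where "\<Phi>n = (\<lambda>s. (\<phi>n (h1 s), \<psi>n (h2 s)))"
        define \<Phi> where "\<Phi> = (\<lambda>s. (\<phi> (h1 s), \<psi> (h2 s)))"
        have P1: "parameter (mXn n \<Otimes>\<^sub>M mYn n) \<Phi>n" unfolding \<Phi>n_def by (rule prod_param[OF EX(3) EY(3) sfY(2)])
        have P2: "parameter (mX \<Otimes>\<^sub>M mY) \<Phi>" unfolding \<Phi>_def by (rule prod_param[OF EX(4) EY(4) sfY(1)])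
        have bound: "\<bar>prod_dist (pn n) (dXn n) (dYn n) (\<Phi>n s) (\<Phi>n t) - prod_dist p dX dY (\<Phi> s) (\<Phi> t)\<bar> \<le> \<rho>/2"
          if st: "s \<in> ?K" "t \<in> ?K" for s t
        proof -
          have s1: "s \<in> UI" "hh s \<in> ?A \<times> ?B" using st(1) by (simp_all only: mem_Collect_eq)
          have t1: "t \<in> UI" "hh t \<in> ?A \<times> ?B" using st(2) by (simp_all only: mem_Collect_eq)
          have hs: "h1 s \<in> ?A" "h2 s \<in> ?B" "h1 t \<in> ?A" "h2 t \<in> ?B"
            using hh_in[OF s1(1), of ?A ?B] hh_in[OF t1(1), of ?A ?B] s1(2) t1(2) by blast+
          let ?a1 = "dXn n (\<phi>n (h1 s)) (\<phi>n (h1 t))" and ?b1 = "dX (\<phi> (h1 s)) (\<phi> (h1 t))"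
          let ?a2 = "dYn n (\<psi>n (h2 s)) (\<psi>n (h2 t))" and ?b2 = "dY (\<psi> (h2 s)) (\<psi> (h2 t))"
          have e1: "\<bar>?a1 - ?b1\<bar> \<le> \<epsilon>X" using EX(7) hs by auto
          have e2: "\<bar>?a2 - ?b2\<bar> \<le> \<epsilon>Y" using EY(7) hs by auto
          have spx: "\<phi> (h1 s) \<in> space mX" "\<phi> (h1 t) \<in> space mX" using hs by auto
          have spy: "\<psi> (h2 s) \<in> space mY" "\<psi> (h2 t) \<in> space mY" using hs by auto
          have b1R: "?b1 \<le> 2 * R1"
          proof -
            have "?b1 \<le> dX (\<phi> (h1 s)) x0 + dX x0 (\<phi> (h1 t))" using MX.triangle spx x0 by blast
            moreover have "dX x0 (\<phi> (h1 t)) = dX (\<phi> (h1 t)) x0" by (rule MX.commute)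
            ultimately show ?thesis using hs by auto
          qed
          have b2R: "?b2 \<le> 2 * R2"
          proof -
            have "?b2 \<le> dY (\<psi> (h2 s)) y0 + dY y0 (\<psi> (h2 t))" using MY.triangle spy y0 by blast
            moreover have "dY y0 (\<psi> (h2 t)) = dY (\<psi> (h2 t)) y0" by (rule MY.commute)
            ultimately show ?thesis using hs by auto
          qed
          have lhs: "prod_dist (pn n) (dXn n) (dYn n) (\<Phi>n s) (\<Phi>n t) = Gr (rn n) ?a1 ?a2"
          proof -
            have "prod_dist (pn n) (dXn n) (dYn n) (\<Phi>n s) (\<Phi>n t) = Fp (pn n) ?a1 ?a2"
              unfolding prod_dist_def \<Phi>n_def by (simp only: fst_conv snd_conv)
            also have "\<dots> = Gr (rn n) ?a1 ?a2" unfolding rn_def using pn1 by (intro Fp_Gr) blast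
            finally show ?thesis .
          qed
          have rhs: "prod_dist p dX dY (\<Phi> s) (\<Phi> t) = Gr r ?b1 ?b2"
          proof -
            have "prod_dist p dX dY (\<Phi> s) (\<Phi> t) = Fp p ?b1 ?b2"
              unfolding prod_dist_def \<Phi>_def by (simp only: fst_conv snd_conv)
            also have "\<dots> = Gr r ?b1 ?b2" unfolding r_def using p1 by (intro Fp_Gr)
            finally show ?thesis .
          qed
          have "\<bar>Gr (rn n) ?a1 ?a2 - Gr (rn n) ?b1 ?b2\<bar> \<le> 2 * max \<bar>?a1 - ?b1\<bar> \<bar>?a2 - ?b2\<bar>"
            using rn01 by (intro Gr_lip) auto
          also have "\<dots> \<le> 2 * max \<epsilon>X \<epsilon>Y" using max.mono[OF e1 e2] by simp
          also have "\<dots> < \<rho>/4" using EX(1) EY(1) by simp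
          finally have t1: "\<bar>Gr (rn n) ?a1 ?a2 - Gr (rn n) ?b1 ?b2\<bar> < \<rho>/4" .
          have "\<bar>Gr (rn n) ?b1 ?b2 - Gr r ?b1 ?b2\<bar> \<le> (2 powr \<bar>rn n - r\<bar> - 1) * (2 * max ?b1 ?b2)"
            using rn01 r01 by (intro Gr_diff) auto
          also have "\<dots> \<le> (2 powr \<bar>rn n - r\<bar> - 1) * (4 * (R1 + R2))"
          proof (rule mult_left_mono)
            show "2 * max ?b1 ?b2 \<le> 4 * (R1 + R2)" using b1R b2R R1 R2 by auto
            show "0 \<le> 2 powr \<bar>rn n - r\<bar> - 1" by (simp add: ge_one_powr_ge_zero)
          qed
          finally have t2: "\<bar>Gr (rn n) ?b1 ?b2 - Gr r ?b1 ?b2\<bar> < \<rho>/4" using elim(5) by linarith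
          show ?thesis unfolding lhs rhs using t1 t2 by linarith
        qed
        have "?bP n \<le> \<rho>/2"
          by (rule B_le[where dX="prod_dist (pn n) (dXn n) (dYn n)" and dY="prod_dist p dX dY", OF _ P1 P2 Ks Km bound]) (use rho in simp_all)
        moreover have "0 \<le> ?bP n" using P1 P2 by (intro B_nonneg) auto
        ultimately show ?thesis using rho by simp
      qed
    qed
  qed
  then show ?thesis unfolding box_converges_def by (simp add: tendsto_iff)
qed

theorem mainTheorem14:
  shows "(\<forall>(dXn :: nat \<Rightarrow> 'a \<Rightarrow> 'a \<Rightarrow> real) mXn (dX :: 'b \<Rightarrow> 'b \<Rightarrow> real) mX
            (dYn :: nat \<Rightarrow> 'c \<Rightarrow> 'c \<Rightarrow> real) mYn (dY :: 'd \<Rightarrow> 'd \<Rightarrow> real) mY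
            (pn :: nat \<Rightarrow> ennreal) (p :: ennreal).
            (\<forall>n. mm_space (dXn n) (mXn n)) \<and> mm_space dX mX \<and>
            (\<forall>n. mm_space (dYn n) (mYn n)) \<and> mm_space dY mY \<and>
            box_converges dXn mXn dX mX \<and> box_converges dYn mYn dY mY \<and>
            (\<forall>n. 1 \<le> pn n) \<and> 1 \<le> p \<and> pn \<longlonglongrightarrow> p
          \<longrightarrow> box_converges (\<lambda>n. prod_dist (pn n) (dXn n) (dYn n)) (\<lambda>n. mXn n \<Otimes>\<^sub>M mYn n)
                             (prod_dist p dX dY) (mX \<Otimes>\<^sub>M mY))
       \<and>
       (\<forall>(dXn :: nat \<Rightarrow> 'e \<Rightarrow> 'e \<Rightarrow> real) mXn (dX :: 'f \<Rightarrow> 'f \<Rightarrow> real) mX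
            (Fn :: nat \<Rightarrow> real \<Rightarrow> real) (F :: real \<Rightarrow> real).
            (\<forall>n. mm_space (dXn n) (mXn n)) \<and> mm_space dX mX \<and>
            box_converges dXn mXn dX mX \<and>
            (\<forall>n. continuous_on {0..} (Fn n) \<and> Fn n ` {0..} \<subseteq> {0..} \<and> metric_preserving (Fn n)) \<and>
            continuous_on {0..} F \<and> F ` {0..} \<subseteq> {0..} \<and> metric_preserving F \<and>
            (\<forall>t\<ge>0. (\<lambda>n. Fn n t) \<longlonglongrightarrow> F t)
          \<longrightarrow> box_converges (\<lambda>n x y. Fn n (dXn n x y)) mXn (\<lambda>x y. F (dX x y)) mX)"
  proof (intro conjI allI impI)
  fix dXn :: "nat \<Rightarrow> 'a \<Rightarrow> 'a \<Rightarrow> real" and mXn and dX :: "'b \<Rightarrow> 'b \<Rightarrow> real" and mX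
    and dYn :: "nat \<Rightarrow> 'c \<Rightarrow> 'c \<Rightarrow> real" and mYn and dY :: "'d \<Rightarrow> 'd \<Rightarrow> real" and mY
    and pn :: "nat \<Rightarrow> ennreal" and p :: ennreal
  assume h: "(\<forall>n. mm_space (dXn n) (mXn n)) \<and> mm_space dX mX \<and>
            (\<forall>n. mm_space (dYn n) (mYn n)) \<and> mm_space dY mY \<and>
            box_converges dXn mXn dX mX \<and> box_converges dYn mYn dY mY \<and>
            (\<forall>n. 1 \<le> pn n) \<and> 1 \<le> p \<and> pn \<longlonglongrightarrow> p"
  show "box_converges (\<lambda>n. prod_dist (pn n) (dXn n) (dYn n)) (\<lambda>n. mXn n \<Otimes>\<^sub>M mYn n)
                             (prod_dist p dX dY) (mX \<Otimes>\<^sub>M mY)"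
    using h by (elim conjE) (rule partA; assumption)
next
  fix dXn :: "nat \<Rightarrow> 'e \<Rightarrow> 'e \<Rightarrow> real" and mXn and dX :: "'f \<Rightarrow> 'f \<Rightarrow> real" and mX
    and Fn :: "nat \<Rightarrow> real \<Rightarrow> real" and F :: "real \<Rightarrow> real"
  assume h: "(\<forall>n. mm_space (dXn n) (mXn n)) \<and> mm_space dX mX \<and>
            box_converges dXn mXn dX mX \<and>
            (\<forall>n. continuous_on {0..} (Fn n) \<and> Fn n ` {0..} \<subseteq> {0..} \<and> metric_preserving (Fn n)) \<and>
            continuous_on {0..} F \<and> F ` {0..} \<subseteq> {0..} \<and> metric_preserving F \<and>
            (\<forall>t\<ge>0. (\<lambda>n. Fn n t) \<longlonglongrightarrow> F t)"
  show "box_converges (\<lambda>n x y. Fn n (dXn n x y)) mXn (\<lambda>x y. F (dX x y)) mX"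
    using h by (elim conjE) (rule partB; assumption)
qed

end
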